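(* For every integer $n\ge1$, the Wang shift $\Omega_n$ is aperiodic, i.e., $\Omega_n$ is nonempty and no configuration $x\in\Omega_n$ satisfies $\sigma^{\mathbf k}(x)=x$ for a nonzero vector $\mathbf k\in\mathbb{Z}^2$.
   Context: Fix an integer $n\ge1$. Let $V_n=\{(v_0,v_1,v_2)\in\mathbb{Z}^3: 0\le v_0\le v_1\le 1,\ v_1\le v_2\le n+1\}$; write $(v_0,v_1,v_2)$ as the word $v_0v_1v_2$. A Wang tile is a quadruple $t=(a,b,c,d)$ of labels with $\mathrm{RIGHT}(t)=a$, $\mathrm{TOP}(t)=b$, $\mathrm{LEFT}(t)=c$, $\mathrm{BOTTOM}(t)=d$. For $t=(a,b,c,d)$ let $\hat t=(b,a,d,c)$ and $\hat S=\{\hat t: t\in S\}$. Define (tiles written as (right, top, left, bottom)): $W_n=\{(11(i+1),11(j+1),11i,11j):1\le i,j\le n\}$; $b_n^i=(00(i+1),111,00i,11n)$, $B_n=\{b_n^i:0\le i\le n-1\}$; $g_n^i=(01(i+1),111,00i,11(n+1))$, $G_n=\{g_n^i:0\le i\le n\}$; $y_n^i=(01(i+1),112,01i,11(n+1))$, $Y_n=\{y_n^i:1\le i\le n\}$; junction tiles $j_n^{k,l,r,s}=((0,k,l),(0,r,s),(0,s,r+n),(0,l,k+n))$ for $(k,l),(r,s)\in\{(0,0),(0,1),(1,1)\}$; $J_n$ is the set of these 9 tiles minus $j_n^{0,0,1,1}$ and $j_n^{1,1,0,0}$. $\mathcal{T}_n=W_n\cup B_n\cup G_n\cup Y_n\cup\hat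 B_n\cup\hat G_n\cup\hat Y_n\cup J_n$. A configuration $x:\mathbb{Z}^2\to\mathcal{T}_n$ is valid if $\mathrm{RIGHT}(x(\mathbf m))=\mathrm{LEFT}(x(\mathbf m+\mathbf e_1))$ and $\mathrm{TOP}(x(\mathbf m))=\mathrm{BOTTOM}(x(\mathbf m+\mathbf e_2))$ for all $\mathbf m$; $\Omega_n$ is the set of valid configurations, with shift $(\sigma^{\mathbf k}x)_{\mathbf m}=x_{\mathbf m+\mathbf k}$. *)

theory Defs
  imports Main
begin

text \<open>Labels are words v0 v1 v2, encoded as integer triples (v0, v1, v2).
Tiles are quadruples (right, top, left, bottom).\<close>

type_synonym label = "int \<times> int \<times> int"
type_synonym tile = "label \<times> label \<times> label \<times> label"

definition RIGHT :: "tile \<Rightarrow> label" where "RIGHT t = (case t of (a,b,c,d) \<Rightarrow> a)"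
definition TOP :: "tile \<Rightarrow> label" where "TOP t = (case t of (a,b,c,d) \<Rightarrow> b)"
definition LEFT :: "tile \<Rightarrow> label" where "LEFT t = (case t of (a,b,c,d) \<Rightarrow> c)"
definition BOTTOM :: "tile \<Rightarrow> label" where "BOTTOM t = (case t of (a,b,c,d) \<Rightarrow> d)"

definition hat :: "tile \<Rightarrow> tile" where
  "hat t = (case t of (a,b,c,d) \<Rightarrow> (b,a,d,c))"

definition W :: "nat \<Rightarrow> tile set" where
  "W n = {((1,1,i+1),(1,1,j+1),(1,1,i),(1,1,j)) | i j. 1 \<le> i \<and> i \<le> int n \<and> 1 \<le> j \<and> j \<le> int n}"

definition B :: "nat \<Rightarrow> tile set" where
  "B n = {((0,0,i+1),(1,1,1),(0,0,i),(1,1,int n)) | i. 0 \<le> i \<and> i \<le> int n - 1}"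

definition G :: "nat \<Rightarrow> tile set" where
  "G n = {((0,1,i+1),(1,1,1),(0,0,i),(1,1,int n+1)) | i. 0 \<le> i \<and> i \<le> int n}"

definition Y :: "nat \<Rightarrow> tile set" where
  "Y n = {((0,1,i+1),(1,1,2),(0,1,i),(1,1,int n+1)) | i. 1 \<le> i \<and> i \<le> int n}"

definition junction :: "nat \<Rightarrow> int \<Rightarrow> int \<Rightarrow> int \<Rightarrow> int \<Rightarrow> tile" where
  "junction n k l r s = ((0,k,l),(0,r,s),(0,s,r + int n),(0,l,k + int n))"

definition JP :: "(int \<times> int) set" where "JP = {(0,0),(0,1),(1,1)}"

definition J :: "nat \<Rightarrow> tile set" where
  "J n = {junction n k l r s | k l r s. (k,l) \<in> JP \<and> (r,s) \<in> JP}
         - {junction n 0 0 1 1, junction n 1 1 0 0}"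

definition tiles :: "nat \<Rightarrow> tile set" where
  "tiles n = W n \<union> B n \<union> G n \<union> Y n \<union> hat ` B n \<union> hat ` G n \<union> hat ` Y n \<union> J n"

definition valid :: "nat \<Rightarrow> (int \<times> int \<Rightarrow> tile) \<Rightarrow> bool" where
  "valid n x \<longleftrightarrow> (\<forall>m. x m \<in> tiles n) \<and>
     (\<forall>a b. RIGHT (x (a,b)) = LEFT (x (a+1,b)) \<and> TOP (x (a,b)) = BOTTOM (x (a,b+1)))"

definition Omega :: "nat \<Rightarrow> (int \<times> int \<Rightarrow> tile) set" where
  "Omega n = {x. valid n x}"

definition shift :: "int \<times> int \<Rightarrow> (int \<times> int \<Rightarrow> tile) \<Rightarrow> (int \<times> int \<Rightarrow> tile)" where
  "shift k x = (\<lambda>(a,b). x (a + fst k, b + snd k))"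

end

theory Submission
  imports Defs "HOL-Library.FuncSet" "HOL-Library.Infinite_Set"
begin

definition e0 :: "label \<Rightarrow> int" where "e0 l = fst l"
definition e1 :: "label \<Rightarrow> int" where "e1 l = fst (snd l)"
definition e2 :: "label \<Rightarrow> int" where "e2 l = snd (snd l)"

lemma lab_eq: "(l::label) = (e0 l, e1 l, e2 l)" by (simp add: e0_def e1_def e2_def)
lemma e_simps[simp]: "e0 (a,b,c) = a" "e1 (a,b,c) = b" "e2 (a,b,c) = c"
  by (simp_all add: e0_def e1_def e2_def)

definition BGYs :: "nat \<Rightarrow> tile set" where
  "BGYs n = {((0,f',i+1),(1,1,1+f),(0,f,i),(1,1,int n+f')) | f f' i.
      f \<in> {0,1} \<and> f' \<in> {0,1} \<and> 0 \<le> i \<and> i \<le> int n}"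
definition Js :: "nat \<Rightarrow> tile set" where
  "Js n = {junction n k l r s | k l r s. k \<in> {0,1} \<and> l \<in> {0,1} \<and> r \<in> {0,1} \<and> s \<in> {0,1}}"
definition tstar :: "nat \<Rightarrow> tile set" where
  "tstar n = W n \<union> BGYs n \<union> hat ` BGYs n \<union> Js n"

definition valids :: "nat \<Rightarrow> (int \<times> int \<Rightarrow> tile) \<Rightarrow> bool" where
  "valids n x \<longleftrightarrow> (\<forall>m. x m \<in> tstar n) \<and>
     (\<forall>a b. RIGHT (x (a,b)) = LEFT (x (a+1,b)) \<and> TOP (x (a,b)) = BOTTOM (x (a,b+1)))"

lemma tiles_sub: "tiles n \<subseteq> tstar n"
proof -
  have "B n \<subseteq> BGYs n"
  proof
    fix t assume "t \<in> B n"
    then obtain i where "t = ((0,0,i+1),(1,1,1),(0,0,i),(1,1,int n))" "0 \<le> i" "i \<le> int n - 1"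
      unfolding B_def by blast
    then show "t \<in> BGYs n" unfolding BGYs_def by (intro CollectI exI[of _ 0] exI[of _ i]) simp
  qed
  moreover have "G n \<subseteq> BGYs n"
  proof
    fix t assume "t \<in> G n"
    then obtain i where "t = ((0,1,i+1),(1,1,1),(0,0,i),(1,1,int n+1))" "0 \<le> i" "i \<le> int n"
      unfolding G_def by blast
    then show "t \<in> BGYs n" unfolding BGYs_def by (intro CollectI exI[of _ 0] exI[of _ 1] exI[of _ i]) simp
  qed
  moreover have "Y n \<subseteq> BGYs n"
  proof
    fix t assume "t \<in> Y n"
    then obtain i where "t = ((0,1,i+1),(1,1,2),(0,1,i),(1,1,int n+1))" "1 \<le> i" "i \<le> int n"
      unfolding Y_def by blast
    then show "t \<in> BGYs n" unfolding BGYs_def by (intro CollectI exI[of _ 1] exI[of _ 1] exI[of _ i]) simp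
  qed
  moreover have "J n \<subseteq> Js n" unfolding J_def Js_def JP_def by blast
  ultimately show ?thesis unfolding tiles_def tstar_def by blast
qed

lemma valid_valids: "valid n x \<Longrightarrow> valids n x"
  using tiles_sub unfolding valid_def valids_def by blast

definition LR :: "nat \<Rightarrow> label \<Rightarrow> label \<Rightarrow> label \<Rightarrow> label \<Rightarrow> bool" where
  "LR n R T L Bo \<longleftrightarrow>
    (e0 L = 1 \<and> e0 Bo = 1 \<and> R = (1,1,e2 L + 1) \<and> T = (1,1,e2 Bo + 1) \<and> L = (1,1,e2 L) \<and> Bo = (1,1,e2 Bo)
       \<and> 1 \<le> e2 L \<and> e2 L \<le> int n \<and> 1 \<le> e2 Bo \<and> e2 Bo \<le> int n)
  \<or> (e0 L = 0 \<and> e0 Bo = 1 \<and> R = (0, e1 R, e2 L + 1) \<and> L = (0, e1 L, e2 L) \<and> T = (1,1,1 + e1 L)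
       \<and> Bo = (1,1,int n + e1 R) \<and> e1 L \<in> {0,1} \<and> e1 R \<in> {0,1} \<and> 0 \<le> e2 L \<and> e2 L \<le> int n)
  \<or> (e0 L = 1 \<and> e0 Bo = 0 \<and> T = (0, e1 T, e2 Bo + 1) \<and> Bo = (0, e1 Bo, e2 Bo) \<and> R = (1,1,1 + e1 Bo)
       \<and> L = (1,1,int n + e1 T) \<and> e1 Bo \<in> {0,1} \<and> e1 T \<in> {0,1} \<and> 0 \<le> e2 Bo \<and> e2 Bo \<le> int n)
  \<or> (e0 L = 0 \<and> e0 Bo = 0 \<and> R = (0, e1 R, e2 R) \<and> T = (0, e1 T, e2 T)
       \<and> L = (0, e2 T, e1 T + int n) \<and> Bo = (0, e2 R, e1 R + int n)
       \<and> e1 R \<in> {0,1} \<and> e2 R \<in> {0,1} \<and> e1 T \<in> {0,1} \<and> e2 T \<in> {0,1})"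

lemma tstar_LR: "(R,T,L,Bo) \<in> tstar n \<Longrightarrow> LR n R T L Bo"
proof -
  assume "(R,T,L,Bo) \<in> tstar n"
  then consider "(R,T,L,Bo) \<in> W n" | "(R,T,L,Bo) \<in> BGYs n" | "(R,T,L,Bo) \<in> hat ` BGYs n" | "(R,T,L,Bo) \<in> Js n"
    unfolding tstar_def by blast
  then show ?thesis
  proof cases
    case 1 then obtain i j where "(R,T,L,Bo) = ((1,1,i+1),(1,1,j+1),(1,1,i),(1,1,j))" "1 \<le> i" "i \<le> int n" "1 \<le> j" "j \<le> int n"
      unfolding W_def by blast
    then show ?thesis unfolding LR_def by (intro disjI1) simp
  next
    case 2 then obtain f f' i where "(R,T,L,Bo) = ((0,f',i+1),(1,1,1+f),(0,f,i),(1,1,int n+f'))"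
      "f \<in> {0,1}" "f' \<in> {0,1}" "0 \<le> i" "i \<le> int n" unfolding BGYs_def by blast
    then show ?thesis unfolding LR_def by (intro disjI2 disjI1) simp
  next
    case 3 then obtain f f' i where "(R,T,L,Bo) = hat ((0,f',i+1),(1,1,1+f),(0,f,i),(1,1,int n+f'))"
      "f \<in> {0,1}" "f' \<in> {0,1}" "0 \<le> i" "i \<le> int n" unfolding BGYs_def by blast
    then show ?thesis unfolding LR_def hat_def by (intro disjI2 disjI1) simp
  next
    case 4 then obtain k l r s where "(R,T,L,Bo) = junction n k l r s" "k \<in> {0,1}" "l \<in> {0,1}" "r \<in> {0,1}" "s \<in> {0,1}"
      unfolding Js_def by blast
    then show ?thesis unfolding junction_def LR_def by (intro disjI2) simp
  qed
qed

lemma LR_tstar: "LR n R T L Bo \<Longrightarrow> (R,T,L,Bo) \<in> tstar n"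
proof -
  assume h: "LR n R T L Bo"
  show ?thesis using h unfolding LR_def
  proof (elim disjE conjE)
    assume a: "e0 L = 1" "e0 Bo = 1" "R = (1,1,e2 L + 1)" "T = (1,1,e2 Bo + 1)" "L = (1,1,e2 L)" "Bo = (1,1,e2 Bo)"
      "1 \<le> e2 L" "e2 L \<le> int n" "1 \<le> e2 Bo" "e2 Bo \<le> int n"
    show ?thesis unfolding tstar_def W_def using a by blast
  next
    assume a: "e0 L = 0" "e0 Bo = 1" "R = (0, e1 R, e2 L + 1)" "L = (0, e1 L, e2 L)" "T = (1,1,1 + e1 L)"
       "Bo = (1,1,int n + e1 R)" "e1 L \<in> {0,1}" "e1 R \<in> {0,1}" "0 \<le> e2 L" "e2 L \<le> int n"
    have "(R,T,L,Bo) \<in> BGYs n" unfolding BGYs_def using a by blast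
    then show ?thesis unfolding tstar_def by blast
  next
    assume a: "e0 L = 1" "e0 Bo = 0" "T = (0, e1 T, e2 Bo + 1)" "Bo = (0, e1 Bo, e2 Bo)" "R = (1,1,1 + e1 Bo)"
       "L = (1,1,int n + e1 T)" "e1 Bo \<in> {0,1}" "e1 T \<in> {0,1}" "0 \<le> e2 Bo" "e2 Bo \<le> int n"
    have "(T,R,Bo,L) \<in> BGYs n" unfolding BGYs_def using a by blast
    then have "hat (T,R,Bo,L) \<in> hat ` BGYs n" by blast
    then show ?thesis unfolding tstar_def hat_def by simp
  next
    assume a: "e0 L = 0" "e0 Bo = 0" "R = (0, e1 R, e2 R)" "T = (0, e1 T, e2 T)"
       "L = (0, e2 T, e1 T + int n)" "Bo = (0, e2 R, e1 R + int n)"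
       "e1 R \<in> {0,1}" "e2 R \<in> {0,1}" "e1 T \<in> {0,1}" "e2 T \<in> {0,1}"
    have "(R,T,L,Bo) = junction n (e1 R) (e2 R) (e1 T) (e2 T)" unfolding junction_def using a by simp
    then show ?thesis unfolding tstar_def Js_def using a by blast
  qed
qed

lemma LR_hat: "LR n R T L Bo \<Longrightarrow> LR n T R Bo L"
  unfolding LR_def
  apply (elim disjE)
     apply (rule disjI1; simp)
    apply (rule disjI2, rule disjI2, rule disjI1; simp)
   apply (rule disjI2, rule disjI1; simp)
  apply (rule disjI2, rule disjI2, rule disjI2; simp)
  done

lemma tstar_hat: "t \<in> tstar n \<Longrightarrow> hat t \<in> tstar n"
proof -
  assume a: "t \<in> tstar n"
  obtain R T L Bo where t: "t = (R,T,L,Bo)" by (cases t) auto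
  have "LR n R T L Bo" using a t tstar_LR by simp
  then have "LR n T R Bo L" by (rule LR_hat)
  then have "(T,R,Bo,L) \<in> tstar n" by (rule LR_tstar)
  then show ?thesis using t unfolding hat_def by simp
qed


definition H :: "(int \<times> int \<Rightarrow> tile) \<Rightarrow> int \<Rightarrow> int \<Rightarrow> label" where "H x a b = LEFT (x (a,b))"
definition V :: "(int \<times> int \<Rightarrow> tile) \<Rightarrow> int \<Rightarrow> int \<Rightarrow> label" where "V x a b = BOTTOM (x (a,b))"

lemma tile_eq: "(t::tile) = (RIGHT t, TOP t, LEFT t, BOTTOM t)"
  by (cases t) (simp add: RIGHT_def TOP_def LEFT_def BOTTOM_def)

lemma cellLR: "valids n x \<Longrightarrow> LR n (H x (a+1) b) (V x a (b+1)) (H x a b) (V x a b)"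
proof -
  assume v: "valids n x"
  have "x (a,b) \<in> tstar n" using v unfolding valids_def by blast
  moreover have "x (a,b) = (H x (a+1) b, V x a (b+1), H x a b, V x a b)"
    using v tile_eq[of "x (a,b)"] unfolding valids_def H_def V_def by metis
  ultimately show ?thesis using tstar_LR by metis
qed

lemma LR_e0: "LR n R T L Bo \<Longrightarrow> e0 R = e0 L \<and> e0 T = e0 Bo \<and> (e0 L = 0 \<or> e0 L = 1) \<and> (e0 Bo = 0 \<or> e0 Bo = 1)"
  by (cases R; cases T; cases L; cases Bo) (auto simp: LR_def)

lemma LR_W: "LR n R T L Bo \<Longrightarrow> e0 L = 1 \<Longrightarrow> e0 Bo = 1 \<Longrightarrow>
   e1 L = 1 \<and> e1 R = 1 \<and> e2 R = e2 L + 1 \<and> 1 \<le> e2 L \<and> e2 L \<le> int n \<and>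
   e1 Bo = 1 \<and> e1 T = 1 \<and> e2 T = e2 Bo + 1 \<and> 1 \<le> e2 Bo \<and> e2 Bo \<le> int n"
  by (cases R; cases T; cases L; cases Bo) (auto simp: LR_def)

lemma LR_BGY: "LR n R T L Bo \<Longrightarrow> e0 L = 0 \<Longrightarrow> e0 Bo = 1 \<Longrightarrow>
   e1 L \<in> {0,1} \<and> e1 R \<in> {0,1} \<and> e2 R = e2 L + 1 \<and> 0 \<le> e2 L \<and> e2 L \<le> int n \<and>
   e1 T = 1 \<and> e2 T = 1 + e1 L \<and> e1 Bo = 1 \<and> e2 Bo = int n + e1 R"
  by (cases R; cases T; cases L; cases Bo) (auto simp: LR_def)

lemma LR_J: "LR n R T L Bo \<Longrightarrow> e0 L = 0 \<Longrightarrow> e0 Bo = 0 \<Longrightarrow>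
   e1 R \<in> {0,1} \<and> e2 R \<in> {0,1} \<and> e1 T \<in> {0,1} \<and> e2 T \<in> {0,1} \<and>
   e1 L = e2 T \<and> e2 L = e1 T + int n \<and> e1 Bo = e2 R \<and> e2 Bo = e1 R + int n"
  by (cases R; cases T; cases L; cases Bo) (auto simp: LR_def)


definition rt :: "(int \<times> int \<Rightarrow> tile) \<Rightarrow> int \<Rightarrow> int" where "rt x b = e0 (H x 0 b)"
definition ct :: "(int \<times> int \<Rightarrow> tile) \<Rightarrow> int \<Rightarrow> int" where "ct x a = e0 (V x a 0)"

lemma int_const:
  fixes f :: "int \<Rightarrow> 'a"
  assumes "\<And>a. f (a+1) = f a" shows "f a = f 0"
proof (induct a rule: int_induct[where k=0])
  case base then show ?case by simp
next
  case (step1 i) then show ?case using assms[of i] by simp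
next
  case (step2 i) then show ?case using assms[of "i - 1"] by simp
qed

lemma H_e0: assumes "valids n x" shows "e0 (H x a b) = rt x b"
proof -
  have "\<And>a. e0 (H x (a+1) b) = e0 (H x a b)" using LR_e0[OF cellLR[OF assms]] by blast
  then show ?thesis unfolding rt_def using int_const[of "\<lambda>a. e0 (H x a b)"] by blast
qed

lemma V_e0: assumes "valids n x" shows "e0 (V x a b) = ct x a"
proof -
  have "\<And>b. e0 (V x a (b+1)) = e0 (V x a b)" using LR_e0[OF cellLR[OF assms]] by blast
  then show ?thesis unfolding ct_def using int_const[of "\<lambda>b. e0 (V x a b)"] by blast
qed

lemma rt01: "valids n x \<Longrightarrow> rt x b = 0 \<or> rt x b = 1"
  using LR_e0[OF cellLR] H_e0 by metis
lemma ct01: "valids n x \<Longrightarrow> ct x a = 0 \<or> ct x a = 1"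
  using LR_e0[OF cellLR] V_e0 by metis

definition tr :: "(int \<times> int \<Rightarrow> tile) \<Rightarrow> (int \<times> int \<Rightarrow> tile)" where
  "tr x = (\<lambda>(a,b). hat (x (b,a)))"

lemma hat_parts: "RIGHT (hat t) = TOP t" "TOP (hat t) = RIGHT t" "LEFT (hat t) = BOTTOM t" "BOTTOM (hat t) = LEFT t"
  by (cases t; simp add: hat_def RIGHT_def TOP_def LEFT_def BOTTOM_def)+

lemma H_tr: "H (tr x) a b = V x b a" unfolding H_def V_def tr_def by (simp add: hat_parts)
lemma V_tr: "V (tr x) a b = H x b a" unfolding H_def V_def tr_def by (simp add: hat_parts)
lemma rt_tr: "rt (tr x) = ct x" unfolding rt_def ct_def by (simp add: H_tr fun_eq_iff)
lemma ct_tr: "ct (tr x) = rt x" unfolding rt_def ct_def by (simp add: V_tr fun_eq_iff)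

lemma valids_tr: "valids n x \<Longrightarrow> valids n (tr x)"
  unfolding valids_def tr_def by (auto simp: hat_parts tstar_hat)

lemma W_cell: assumes "valids n x" "rt x b = 1" "ct x a = 1"
  shows "e1 (H x a b) = 1 \<and> e2 (H x (a+1) b) = e2 (H x a b) + 1 \<and> 1 \<le> e2 (H x a b) \<and> e2 (H x a b) \<le> int n \<and>
         e1 (V x a b) = 1 \<and> e2 (V x a (b+1)) = e2 (V x a b) + 1 \<and> 1 \<le> e2 (V x a b) \<and> e2 (V x a b) \<le> int n"
  using LR_W[OF cellLR[OF assms(1)]] H_e0[OF assms(1)] V_e0[OF assms(1)] assms by metis

lemma BGY_cell: assumes "valids n x" "rt x b = 0" "ct x a = 1"
  shows "e1 (H x a b) \<in> {0,1} \<and> e1 (H x (a+1) b) \<in> {0,1} \<and> e2 (H x (a+1) b) = e2 (H x a b) + 1 \<and>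
    0 \<le> e2 (H x a b) \<and> e2 (H x a b) \<le> int n \<and>
    e2 (V x a (b+1)) = 1 + e1 (H x a b) \<and> e2 (V x a b) = int n + e1 (H x (a+1) b)"
  using LR_BGY[OF cellLR[OF assms(1)]] H_e0[OF assms(1)] V_e0[OF assms(1)] assms by metis

lemma HAT_cell: assumes "valids n x" "rt x b = 1" "ct x a = 0"
  shows "e1 (V x a b) \<in> {0,1} \<and> e1 (V x a (b+1)) \<in> {0,1} \<and> e2 (V x a (b+1)) = e2 (V x a b) + 1 \<and>
    0 \<le> e2 (V x a b) \<and> e2 (V x a b) \<le> int n \<and>
    e2 (H x (a+1) b) = 1 + e1 (V x a b) \<and> e2 (H x a b) = int n + e1 (V x a (b+1))"
  using BGY_cell[OF valids_tr[OF assms(1)], of a b] assms by (simp add: H_tr V_tr rt_tr ct_tr)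

lemma J_cell: assumes "valids n x" "rt x b = 0" "ct x a = 0"
  shows "e1 (H x (a+1) b) \<in> {0,1} \<and> e2 (H x (a+1) b) \<in> {0,1} \<and> e1 (V x a (b+1)) \<in> {0,1} \<and> e2 (V x a (b+1)) \<in> {0,1} \<and>
   e1 (H x a b) = e2 (V x a (b+1)) \<and> e2 (H x a b) = e1 (V x a (b+1)) + int n \<and>
   e1 (V x a b) = e2 (H x (a+1) b) \<and> e2 (V x a b) = e1 (H x (a+1) b) + int n"
  using LR_J[OF cellLR[OF assms(1)]] H_e0[OF assms(1)] V_e0[OF assms(1)] assms by metis

lemma inc_V: "valids n x \<Longrightarrow> rt x b = 1 \<Longrightarrow> e2 (V x a (b+1)) = e2 (V x a b) + 1"
  using W_cell HAT_cell ct01 by metis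
lemma inc_H: "valids n x \<Longrightarrow> ct x a = 1 \<Longrightarrow> e2 (H x (a+1) b) = e2 (H x a b) + 1"
  using W_cell BGY_cell rt01 by metis
lemma bnd_V: "valids n x \<Longrightarrow> rt x b = 1 \<Longrightarrow> 0 \<le> e2 (V x a b) \<and> e2 (V x a b) \<le> int n"
  using W_cell HAT_cell ct01 by (metis dual_order.trans zero_le_one)
lemma bnd_H: "valids n x \<Longrightarrow> ct x a = 1 \<Longrightarrow> 0 \<le> e2 (H x a b) \<and> e2 (H x a b) \<le> int n"
  using W_cell BGY_cell rt01 by (metis dual_order.trans zero_le_one)
lemma bnd_V1: "valids n x \<Longrightarrow> rt x b = 1 \<Longrightarrow> ct x a = 1 \<Longrightarrow> 1 \<le> e2 (V x a b)"
  using W_cell by metis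

lemma chain_V:
  assumes v: "valids n x" and ones: "\<And>e. 0 \<le> e \<Longrightarrow> e < int m \<Longrightarrow> rt x (b + e) = 1"
  shows "e2 (V x a (b + int m)) = e2 (V x a b) + int m"
  using ones
proof (induct m)
  case 0 then show ?case by simp
next
  case (Suc m)
  have "rt x (b + int m) = 1" using Suc.prems[of "int m"] by simp
  then have "e2 (V x a (b + int m + 1)) = e2 (V x a (b + int m)) + 1" using inc_V[OF v] by blast
  moreover have "e2 (V x a (b + int m)) = e2 (V x a b) + int m" using Suc by simp
  ultimately show ?case by (simp add: algebra_simps)
qed

lemma exists_0row: assumes v: "valids n x" shows "\<exists>b. rt x b = 0"
proof (rule ccontr)
  assume "\<not> ?thesis"
  then have ones: "\<And>b. rt x b = 1" using rt01[OF v] by metis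
  have c: "e2 (V x 0 (0 + int (n+1))) = e2 (V x 0 0) + int (n+1)"
    by (rule chain_V[OF v]) (simp add: ones)
  have "0 \<le> e2 (V x 0 0)" using bnd_V[OF v ones] by blast
  moreover have "e2 (V x 0 (int (n+1))) \<le> int n" using bnd_V[OF v ones] by blast
  ultimately show False using c by simp
qed

lemma exists_0col: "valids n x \<Longrightarrow> \<exists>a. ct x a = 0"
  using exists_0row[OF valids_tr] by (simp add: rt_tr)

lemma three_ones_n1:
  assumes v: "valids 1 x" "rt x b = 0" "ct x a = 1" "ct x (a+1) = 1" "ct x (a+2) = 1"
  shows False
proof -
  have "e2 (H x (a+1) b) = e2 (H x a b) + 1" using inc_H[OF v(1) v(3)] .
  moreover have "e2 (H x (a+1+1) b) = e2 (H x (a+1) b) + 1" using inc_H[OF v(1) v(4)] .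
  moreover have "0 \<le> e2 (H x a b)" using bnd_H[OF v(1) v(3)] by blast
  moreover have "e2 (H x (a+2) b) \<le> 1" using bnd_H[OF v(1) v(5)] by simp
  ultimately show False by (simp add: add.assoc)
qed

lemma exists_1row: assumes v: "valids n x" and n: "n \<ge> 1" shows "\<exists>b. rt x b = 1"
proof (rule ccontr)
  assume "\<not> ?thesis"
  then have zeros: "\<And>b. rt x b = 0" using rt01[OF v] by metis
  have Jc: "ct x a = 0 \<Longrightarrow> n = 1 \<and> e1 (H x (a+1) b) = 0 \<and> e1 (H x a b) = 1" for a b
  proof -
    assume c: "ct x a = 0"
    have j1: "e2 (V x a (b+1)) \<in> {0,1}" "e1 (H x a b) = e2 (V x a (b+1))"
      using J_cell[OF v zeros c, of b] by auto
    have j2: "e2 (V x a (b+1)) = e1 (H x (a+1) (b+1)) + int n" "e1 (H x (a+1) (b+1)) \<in> {0,1}"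
      using J_cell[OF v zeros c, of "b+1"] by auto
    have j3: "e2 (V x a b) = e1 (H x (a+1) b) + int n" "e1 (H x (a+1) b) \<in> {0,1}"
      using J_cell[OF v zeros c, of b] by auto
    have j4: "e2 (V x a (b-1+1)) \<in> {0,1}" using J_cell[OF v zeros c, of "b-1"] by auto
    show ?thesis using j1 j2 j3 j4 n by auto
  qed
  have Bc: "ct x a = 1 \<Longrightarrow> 1 + e1 (H x a b) = int n + e1 (H x (a+1) (b+1))
       \<and> e1 (H x a b) \<in> {0,1} \<and> e1 (H x (a+1) (b+1)) \<in> {0,1}" for a b
    using BGY_cell[OF v zeros, of a b] BGY_cell[OF v zeros, of a "b+1"] by auto
  show False
  proof (cases "n = 1")
    case True
    have v1: "valids 1 x" using v True by simp
    obtain c where c: "ct x c = 0" "c \<in> {0,1,2}"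
    proof -
      have "\<not> (ct x 0 = 1 \<and> ct x (0+1) = 1 \<and> ct x (0+2) = 1)"
        using three_ones_n1[OF v1 zeros[of 0], of 0] by blast
      then show ?thesis using that ct01[OF v] by force
    qed
    have e0: "\<And>b. e1 (H x (c+1) b) = 0" using Jc[OF c(1)] by blast
    have c1: "ct x (c+1) = 1" using Jc[of "c+1"] e0 ct01[OF v] by force
    have e1': "\<And>b. e1 (H x (c+2) b) = 0"
    proof -
      fix b show "e1 (H x (c+2) b) = 0" using Bc[OF c1, of "b-1"] e0[of "b-1"] True by (simp add: add.assoc)
    qed
    have c2: "ct x (c+2) = 1" using Jc[of "c+2"] e1' ct01[OF v] by force
    have e2': "\<And>b. e1 (H x (c+3) b) = 0"
    proof -
      fix b show "e1 (H x (c+3) b) = 0" using Bc[OF c2, of "b-1"] e1'[of "b-1"] True by (simp add: add.assoc)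
    qed
    have c3: "ct x (c+3) = 1" using Jc[of "c+3"] e2' ct01[OF v] by force
    show False using three_ones_n1[OF v1 zeros[of 0], of "c+1"] c1 c2 c3 by (simp add: add.assoc)
  next
    case False
    then have n2: "n \<ge> 2" using n by simp
    have allB: "\<And>a. ct x a = 1" using Jc n2 ct01[OF v] by force
    have "1 + e1 (H x 0 0) = int n + e1 (H x 1 1)" "e1 (H x 0 0) \<in> {0,1}" "e1 (H x 1 1) \<in> {0,1}"
      using Bc[OF allB, of 0 0] by auto
    moreover have "1 + e1 (H x 1 1) = int n + e1 (H x 2 2)" "e1 (H x 2 2) \<in> {0,1}"
      using Bc[OF allB, of 1 1] by auto
    ultimately show False using n2 by auto
  qed
qed

lemma exists_1col: "valids n x \<Longrightarrow> n \<ge> 1 \<Longrightarrow> \<exists>a. ct x a = 1"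
  using exists_1row[OF valids_tr] by (simp add: rt_tr)


lemma no_long_ones:
  assumes v: "valids n x" and n: "n \<ge> 1" and ones: "\<And>e. 0 \<le> e \<Longrightarrow> e \<le> int n \<Longrightarrow> rt x (c + e) = 1"
  shows False
proof -
  obtain a where a: "ct x a = 1" using exists_1col[OF v n] by blast
  have ch: "e2 (V x a (c + int n)) = e2 (V x a c) + int n"
    by (rule chain_V[OF v]) (simp add: ones)
  have "1 \<le> e2 (V x a c)" using bnd_V1[OF v _ a] ones[of 0] by simp
  moreover have "e2 (V x a (c + int n)) \<le> int n" using W_cell[OF v ones[of "int n"] a] by simp
  ultimately show False using ch by simp
qed

lemma window_up: assumes "valids n x" "n \<ge> 1" shows "\<exists>e. 1 \<le> e \<and> e \<le> int n + 1 \<and> rt x (b + e) = 0"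
proof (rule ccontr)
  assume "\<not> ?thesis"
  then have "\<And>e. 0 \<le> e \<Longrightarrow> e \<le> int n \<Longrightarrow> rt x ((b+1) + e) = 1" using rt01[OF assms(1)]
    by (metis add.assoc add.commute add_le_cancel_left int_one_le_iff_zero_less le_add_same_cancel1 order_le_less)
  then show False using no_long_ones[OF assms] by blast
qed

lemma gap_values:
  assumes v: "valids n x" and n: "n \<ge> 1" and b: "rt x b = 0" and d: "d \<ge> 1" and bd: "rt x (b + int d) = 0"
    and ones: "\<And>e. 0 < e \<Longrightarrow> e < int d \<Longrightarrow> rt x (b + e) = 1"
  shows "d = n \<or> d = n + 1"
proof -
  obtain a1 where a1: "ct x a1 = 1" using exists_1col[OF v n] by blast
  obtain a0 where a0: "ct x a0 = 0" using exists_0col[OF v] by blast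
  have ones': "\<And>e. 0 \<le> e \<Longrightarrow> e < int (d - 1) \<Longrightarrow> rt x (b + 1 + e) = 1" using ones d
    by (metis add.assoc add_pos_nonneg of_nat_diff of_nat_1 zero_less_one less_diff_eq add.commute)
  have eqd: "b + 1 + int (d - 1) = b + int d" using d by simp
  have c1: "e2 (V x a1 (b + int d)) = e2 (V x a1 (b+1)) + int (d - 1)"
    using chain_V[OF v ones', of "d - 1" a1] eqd by simp
  have c0: "e2 (V x a0 (b + int d)) = e2 (V x a0 (b+1)) + int (d - 1)"
    using chain_V[OF v ones', of "d - 1" a0] eqd by simp
  have s1: "e2 (V x a1 (b+1)) = 1 + e1 (H x a1 b)" "e1 (H x a1 b) \<in> {0,1}" using BGY_cell[OF v b a1] by auto
  have t1: "e2 (V x a1 (b + int d)) = int n + e1 (H x (a1+1) (b + int d))" "e1 (H x (a1+1) (b + int d)) \<in> {0,1}"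
    using BGY_cell[OF v bd a1] by auto
  have s0: "e2 (V x a0 (b+1)) \<in> {0,1}" using J_cell[OF v b a0] by auto
  have t0: "e2 (V x a0 (b + int d)) = e1 (H x (a0+1) (b + int d)) + int n" "e1 (H x (a0+1) (b + int d)) \<in> {0,1}"
    using J_cell[OF v bd a0] by auto
  show ?thesis using c1 c0 s1 t1 s0 t0 d by auto
qed

definition nz :: "(int \<times> int \<Rightarrow> tile) \<Rightarrow> int \<Rightarrow> nat" where
  "nz x b = (LEAST d::nat. 0 < d \<and> rt x (b + int d) = 0)"
definition pz :: "(int \<times> int \<Rightarrow> tile) \<Rightarrow> int \<Rightarrow> nat" where
  "pz x b = (LEAST d::nat. 0 < d \<and> rt x (b - int d) = 0)"
definition nxt where "nxt x b = b + int (nz x b)"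
definition prv where "prv x b = b - int (pz x b)"

lemma nz_props: assumes v: "valids n x" and n: "n \<ge> 1"
  shows "0 < nz x b \<and> rt x (b + int (nz x b)) = 0 \<and> (\<forall>e. 0 < e \<and> e < int (nz x b) \<longrightarrow> rt x (b + e) = 1)"
proof -
  obtain e where e: "1 \<le> e" "rt x (b + e) = 0" using window_up[OF v n] by blast
  have ex: "0 < nat e \<and> rt x (b + int (nat e)) = 0" using e by simp
  have "0 < nz x b \<and> rt x (b + int (nz x b)) = 0" unfolding nz_def by (rule LeastI[of _ "nat e"], rule ex)
  moreover have "\<forall>e. 0 < e \<and> e < int (nz x b) \<longrightarrow> rt x (b + e) = 1"
  proof (intro allI impI)
    fix e assume h: "0 < e \<and> e < int (nz x b)"
    have "\<not> (0 < nat e \<and> rt x (b + int (nat e)) = 0)"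
      using not_less_Least[of "nat e" "\<lambda>d. 0 < d \<and> rt x (b + int d) = 0"] h unfolding nz_def by linarith
    then show "rt x (b + e) = 1" using h rt01[OF v] by auto
  qed
  ultimately show ?thesis by blast
qed

lemma pz_props: assumes v: "valids n x" and n: "n \<ge> 1"
  shows "0 < pz x b \<and> rt x (b - int (pz x b)) = 0 \<and> (\<forall>e. 0 < e \<and> e < int (pz x b) \<longrightarrow> rt x (b - e) = 1)"
proof -
  obtain e where e: "1 \<le> e" "rt x ((b - int n - 2) + e) = 0" "e \<le> int n + 1" using window_up[OF v n] by blast
  define d where "d = int n + 2 - e"
  have ex: "0 < nat d \<and> rt x (b - int (nat d)) = 0" using e unfolding d_def by (simp add: algebra_simps)
  have "0 < pz x b \<and> rt x (b - int (pz x b)) = 0" unfolding pz_def by (rule LeastI[of _ "nat d"], rule ex)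
  moreover have "\<forall>e. 0 < e \<and> e < int (pz x b) \<longrightarrow> rt x (b - e) = 1"
  proof (intro allI impI)
    fix e assume h: "0 < e \<and> e < int (pz x b)"
    have "\<not> (0 < nat e \<and> rt x (b - int (nat e)) = 0)"
      using not_less_Least[of "nat e" "\<lambda>d. 0 < d \<and> rt x (b - int d) = 0"] h unfolding pz_def by linarith
    then show "rt x (b - e) = 1" using h rt01[OF v] by auto
  qed
  ultimately show ?thesis by blast
qed

lemma nz_gap: assumes v: "valids n x" and n: "n \<ge> 1" and b: "rt x b = 0"
  shows "nz x b = n \<or> nz x b = n + 1"
  using gap_values[OF v n b, of "nz x b"] nz_props[OF v n, of b] by auto

lemma nz_le: assumes "valids n x" "n \<ge> 1" "0 < d" "rt x (b + int d) = 0" shows "nz x b \<le> d"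
  unfolding nz_def by (rule Least_le) (use assms in simp)
lemma pz_le: assumes "valids n x" "n \<ge> 1" "0 < d" "rt x (b - int d) = 0" shows "pz x b \<le> d"
  unfolding pz_def by (rule Least_le) (use assms in simp)

lemma prv_nxt: assumes v: "valids n x" and n: "n \<ge> 1" and b: "rt x b = 0"
  shows "prv x (nxt x b) = b"
proof -
  have P: "0 < nz x b" "rt x (b + int (nz x b)) = 0" "\<And>e. 0 < e \<Longrightarrow> e < int (nz x b) \<Longrightarrow> rt x (b + e) = 1"
    using nz_props[OF v n, of b] by auto
  have Q: "0 < pz x (nxt x b)" "rt x (nxt x b - int (pz x (nxt x b))) = 0"
    "\<And>e. 0 < e \<Longrightarrow> e < int (pz x (nxt x b)) \<Longrightarrow> rt x (nxt x b - e) = 1"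
    using pz_props[OF v n, of "nxt x b"] by auto
  have le1: "pz x (nxt x b) \<le> nz x b" using pz_le[OF v n P(1), of "nxt x b"] b unfolding nxt_def by simp
  have le2: "\<not> pz x (nxt x b) < nz x b"
  proof
    assume l: "pz x (nxt x b) < nz x b"
    have "rt x (b + (int (nz x b) - int (pz x (nxt x b)))) = 1" using P(3) l Q(1) by simp
    then show False using Q(2) unfolding nxt_def by (simp add: algebra_simps)
  qed
  show ?thesis using le1 le2 unfolding prv_def nxt_def by simp
qed

lemma nxt_prv: assumes v: "valids n x" and n: "n \<ge> 1" and b: "rt x b = 0"
  shows "nxt x (prv x b) = b"
proof -
  have Q: "0 < pz x b" "rt x (b - int (pz x b)) = 0" "\<And>e. 0 < e \<Longrightarrow> e < int (pz x b) \<Longrightarrow> rt x (b - e) = 1"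
    using pz_props[OF v n, of b] by auto
  have P: "0 < nz x (prv x b)" "rt x (prv x b + int (nz x (prv x b))) = 0"
    "\<And>e. 0 < e \<Longrightarrow> e < int (nz x (prv x b)) \<Longrightarrow> rt x (prv x b + e) = 1"
    using nz_props[OF v n, of "prv x b"] by auto
  have le1: "nz x (prv x b) \<le> pz x b" using nz_le[OF v n Q(1), of "prv x b"] b unfolding prv_def by simp
  have le2: "\<not> nz x (prv x b) < pz x b"
  proof
    assume l: "nz x (prv x b) < pz x b"
    have "rt x (b - (int (pz x b) - int (nz x (prv x b)))) = 1" using Q(3) l P(1) by simp
    then show False using P(2) unfolding prv_def by (simp add: algebra_simps)
  qed
  show ?thesis using le1 le2 unfolding prv_def nxt_def by simp
qed

lemma nxt0: "valids n x \<Longrightarrow> n \<ge> 1 \<Longrightarrow> rt x (nxt x b) = 0" using nz_props unfolding nxt_def by blast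
lemma prv0: "valids n x \<Longrightarrow> n \<ge> 1 \<Longrightarrow> rt x (prv x b) = 0" using pz_props unfolding prv_def by blast

definition b0 where "b0 x = (SOME b. rt x b = 0)"
definition rr :: "(int \<times> int \<Rightarrow> tile) \<Rightarrow> int \<Rightarrow> int" where
  "rr x q = (if 0 \<le> q then (nxt x ^^ nat q) (b0 x) else (prv x ^^ nat (-q)) (b0 x))"

context
  fixes n :: nat and x
  assumes v: "valids n x" and n: "n \<ge> 1"
begin

lemma b00: "rt x (b0 x) = 0"
  unfolding b0_def using exists_0row[OF v] by (rule someI_ex)

lemma nxt_pow0: "rt x ((nxt x ^^ k) (b0 x)) = 0"
  by (induct k) (simp_all add: b00 nxt0[OF v n])
lemma prv_pow0: "rt x ((prv x ^^ k) (b0 x)) = 0"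
  by (induct k) (simp_all add: b00 prv0[OF v n])

lemma rr0: "rt x (rr x q) = 0"
  unfolding rr_def using nxt_pow0 prv_pow0 by simp

lemma rr_suc: "rr x (q+1) = nxt x (rr x q)"
proof (cases "0 \<le> q")
  case True
  then have "nat (q+1) = Suc (nat q)" by simp
  then show ?thesis unfolding rr_def using True by simp
next
  case False
  show ?thesis
  proof (cases "q = -1")
    case True then show ?thesis unfolding rr_def by (simp add: nxt_prv[OF v n b00])
  next
    case False': False
    have "nat (-q) = Suc (nat (-(q+1)))" using False False' by simp
    then have "rr x q = prv x (rr x (q+1))" unfolding rr_def using False False' by simp
    then show ?thesis using nxt_prv[OF v n] rr0 by simp
  qed
qed

lemma rr_pred: "rr x (q-1) = prv x (rr x q)"
  using rr_suc[of "q-1"] prv_nxt[OF v n rr0[of "q-1"]] by simp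

lemma rr_gap: "rr x (q+1) - rr x q = int n \<or> rr x (q+1) - rr x q = int n + 1"
  using nz_gap[OF v n rr0[of q]] rr_suc[of q] unfolding nxt_def by auto

lemma rr_between: "rr x q < b \<Longrightarrow> b < rr x (q+1) \<Longrightarrow> rt x b = 1"
proof -
  assume a: "rr x q < b" "b < rr x (q+1)"
  have "\<forall>e. 0 < e \<and> e < int (nz x (rr x q)) \<longrightarrow> rt x (rr x q + e) = 1" using nz_props[OF v n, of "rr x q"] by blast
  moreover have "0 < b - rr x q \<and> b - rr x q < int (nz x (rr x q))" using a rr_suc[of q] unfolding nxt_def by linarith
  ultimately have "rt x (rr x q + (b - rr x q)) = 1" by blast
  then show ?thesis by simp
qed

lemma rr_step_ge: "rr x q + 1 \<le> rr x (q+1)"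
  using rr_gap[of q] n by auto

lemma rr_mono_nat: "rr x q + int k \<le> rr x (q + int k)"
proof (induct k)
  case 0 then show ?case by simp
next
  case (Suc k)
  have "rr x (q + int k) + 1 \<le> rr x (q + int k + 1)" by (rule rr_step_ge)
  then show ?case using Suc by (simp add: algebra_simps)
qed

lemma rr_mono: "q < q' \<Longrightarrow> rr x q < rr x q'"
  using rr_mono_nat[of q "nat (q' - q)"] by simp

lemma rr_le_mono: "q \<le> q' \<Longrightarrow> rr x q \<le> rr x q'"
  using rr_mono[of q q'] by (cases "q = q'") auto

lemma rr_surj_up: "rt x b = 0 \<Longrightarrow> rr x 0 \<le> b \<Longrightarrow> \<exists>q\<ge>0. rr x q = b"
proof (induct "nat (b - rr x 0)" arbitrary: b rule: less_induct)
  case less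
  show ?case
  proof (cases "b = rr x 0")
    case True then show ?thesis by auto
  next
    case False
    then have lt: "rr x 0 < b" using less.prems by simp
    have "pz x b \<le> nat (b - rr x 0)" using pz_le[OF v n, of "nat (b - rr x 0)" b] lt rr0[of 0] by simp
    then have ge: "rr x 0 \<le> prv x b" unfolding prv_def using lt by linarith
    have lt2: "prv x b < b" using pz_props[OF v n, of b] unfolding prv_def by simp
    obtain q where q: "q \<ge> 0" "rr x q = prv x b"
      using less.hyps[of "prv x b"] ge lt2 prv0[OF v n] by fastforce
    have "rr x (q+1) = b" using rr_suc[of q] q nxt_prv[OF v n less.prems(1)] by simp
    then show ?thesis using q by (intro exI[of _ "q+1"]) simp
  qed
qed

end


context
  fixes n :: nat and x and k :: int
  assumes v: "valids n x" and n: "n \<ge> 1" and kpos: "k > 0" and per: "\<And>b. rt x (b + k) = rt x b"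
begin

lemma per_mult: "rt x (b + m * k) = rt x b"
proof (induct m rule: int_induct[where k=0])
  case base then show ?case by simp
next
  case (step1 i) then show ?case using per[of "b + i * k"] by (simp add: algebra_simps)
next
  case (step2 i) then show ?case using per[of "b + (i - 1) * k"] by (simp add: algebra_simps)
qed

lemma nz_per: "nz x (b + k) = nz x b"
proof -
  have "\<And>d. rt x (b + k + d) = rt x (b + d)" using per by (metis add.commute add.left_commute)
  then show ?thesis unfolding nz_def by simp
qed
lemma pz_per: "pz x (b + k) = pz x b"
proof -
  have "\<And>d. rt x (b + k - d) = rt x (b - d)" using per by (metis add.commute add_diff_eq)
  then show ?thesis unfolding pz_def by simp
qed
lemma nxt_per: "nxt x (b + k) = nxt x b + k" unfolding nxt_def using nz_per by simp
lemma prv_per: "prv x (b + k) = prv x b + k" unfolding prv_def using pz_per by simp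

lemma per_K: "\<exists>K>0. (\<forall>q. rr x (q + K) = rr x q + k) \<and> K < k"
proof -
  have z: "rt x (rr x 0 + k) = 0" using per rr0[OF v n] by simp
  obtain K where K: "K \<ge> 0" "rr x K = rr x 0 + k" using rr_surj_up[OF v n z] kpos by auto
  have Kp: "K > 0" using K kpos by (cases "K = 0") auto
  have sh: "rr x (q + K) = rr x q + k" for q
  proof (induct q rule: int_induct[where k=0])
    case base then show ?case using K by simp
  next
    case (step1 i)
    have "rr x (i + 1 + K) = nxt x (rr x (i + K))" using rr_suc[OF v n, of "i + K"] by (simp add: algebra_simps)
    also have "\<dots> = nxt x (rr x i) + k" using step1 nxt_per by simp
    finally show ?case using rr_suc[OF v n, of i] by simp
  next
    case (step2 i)
    have "rr x (i - 1 + K) = prv x (rr x (i + K))" using rr_pred[OF v n, of "i + K"] by (simp add: algebra_simps)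
    also have "\<dots> = prv x (rr x i) + k" using step2 prv_per by simp
    finally show ?case using rr_pred[OF v n, of i] by simp
  qed
  obtain b1 where b1: "rt x b1 = 1" using exists_1row[OF v n] by blast
  define b2 where "b2 = rr x 0 + (b1 - rr x 0) mod k"
  have b2r: "rt x b2 = 1"
  proof -
    have "b1 = b2 + ((b1 - rr x 0) div k) * k" unfolding b2_def by (simp add: algebra_simps)
    then show ?thesis using per_mult[of b2 "(b1 - rr x 0) div k"] b1 by simp
  qed
  have b2in: "b2 \<in> {rr x 0..<rr x 0 + k}" unfolding b2_def using kpos by simp
  have sub: "rr x ` {0..<K} \<subseteq> {rr x 0..<rr x 0 + k} - {b2}"
  proof
    fix y assume "y \<in> rr x ` {0..<K}"
    then obtain q where q: "0 \<le> q" "q < K" "y = rr x q" by auto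
    have "rr x 0 \<le> y" using rr_le_mono[OF v n q(1)] q by simp
    moreover have "y < rr x 0 + k" using rr_mono[OF v n q(2)] q K by simp
    moreover have "y \<noteq> b2" using rr0[OF v n, of q] b2r q by auto
    ultimately show "y \<in> {rr x 0..<rr x 0 + k} - {b2}" by simp
  qed
  have inj: "inj_on (rr x) {0..<K}"
    by (rule inj_onI) (metis linorder_neqE rr_mono[OF v n] less_irrefl)
  have "card (rr x ` {0..<K}) = nat K" using card_image[OF inj] by simp
  moreover have "card ({rr x 0..<rr x 0 + k} - {b2}) = nat k - 1" using b2in by simp
  moreover have "card (rr x ` {0..<K}) \<le> card ({rr x 0..<rr x 0 + k} - {b2})"
    by (rule card_mono[OF _ sub]) simp
  ultimately have "K < k" using kpos Kp by linarith
  then show ?thesis using Kp sh by blast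
qed

end

lemma tr_tr: "tr (tr x) = x" unfolding tr_def hat_def by (auto simp: fun_eq_iff split: prod.splits)

lemma chain_H:
  assumes v: "valids n x" and ones: "\<And>e. 0 \<le> e \<Longrightarrow> e < int m \<Longrightarrow> ct x (a + e) = 1"
  shows "e2 (H x (a + int m) b) = e2 (H x a b) + int m"
  using chain_V[OF valids_tr[OF v], of m a b] ones by (simp add: rt_tr H_tr V_tr)

definition blk where
  "blk x c c' r r' \<longleftrightarrow> ct x c = 0 \<and> ct x c' = 0 \<and> c < c' \<and> (\<forall>a. c < a \<and> a < c' \<longrightarrow> ct x a = 1) \<and>
     rt x r = 0 \<and> rt x r' = 0 \<and> r < r' \<and> (\<forall>b. r < b \<and> b < r' \<longrightarrow> rt x b = 1)"

lemma blk_tr: "blk (tr x) r r' c c' = blk x c c' r r'"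
  unfolding blk_def rt_tr ct_tr by auto

lemma e1V01: "valids n x \<Longrightarrow> ct x c = 0 \<Longrightarrow> e1 (V x c b) = 0 \<or> e1 (V x c b) = 1"
proof -
  assume v: "valids n x" and c: "ct x c = 0"
  show ?thesis
  proof (cases "rt x b = 0")
    case True then show ?thesis using J_cell[OF v True c] by auto
  next
    case False then have "rt x b = 1" using rt01[OF v] by blast
    then show ?thesis using HAT_cell[OF v _ c] by auto
  qed
qed

lemma gapH: assumes v: "valids n x" and b: "blk x c c' r r'" and bb: "r \<le> b" "b \<le> r'"
  shows "e2 (H x c' b) = e2 (H x (c+1) b) + (c' - c - 1)"
proof -
  have "e2 (H x (c + 1 + int (nat (c' - c - 1))) b) = e2 (H x (c+1) b) + int (nat (c' - c - 1))"
    by (rule chain_H[OF v]) (use b in \<open>auto simp: blk_def\<close>)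
  then show ?thesis using b unfolding blk_def by simp
qed

lemma Rrow: assumes v: "valids n x" and b: "blk x c c' r r'" and b0: "rt x b = 0" and bb: "r \<le> b" "b \<le> r'"
  shows "e1 (V x c b) + (c' - c - 1) = e1 (V x c' (b+1)) + int n"
proof -
  have c: "ct x c = 0" "ct x c' = 0" using b unfolding blk_def by auto
  show ?thesis using gapH[OF v b bb] J_cell[OF v b0 c(1)] J_cell[OF v b0 c(2)] by simp
qed

lemma R1row: assumes v: "valids n x" and b: "blk x c c' r r'" and b1: "rt x b = 1" and bb: "r \<le> b" "b \<le> r'"
  shows "1 + e1 (V x c b) + (c' - c - 1) = int n + e1 (V x c' (b+1))"
proof -
  have c: "ct x c = 0" "ct x c' = 0" using b unfolding blk_def by auto
  show ?thesis using gapH[OF v b bb] HAT_cell[OF v b1 c(1)] HAT_cell[OF v b1 c(2)] by simp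
qed

definition zV :: "(int \<times> int \<Rightarrow> tile) \<Rightarrow> int \<Rightarrow> int \<Rightarrow> int \<Rightarrow> int" where
  "zV x c r r' = (\<Sum>m<nat (r' - r). 1 - e1 (V x c (r + 1 + int m)))"

lemma VI:
  assumes v: "valids n x" and n: "n \<ge> 1" and b: "blk x c c' r r'"
  shows "(c' - c = int n \<longrightarrow> zV x c' r r' = zV x c r r' + 1 \<and> 0 \<le> zV x c r r' \<and> zV x c r r' \<le> r' - r - 1)
       \<and> (c' - c = int n + 1 \<longrightarrow> zV x c r r' = (r' - r) - e1 (V x c r') \<and> zV x c' r r' = 1 - e1 (V x c r))"
proof -
  have bk: "ct x c = 0" "ct x c' = 0" "c < c'" "rt x r = 0" "rt x r' = 0" "r < r'"
    "\<And>b. r < b \<Longrightarrow> b < r' \<Longrightarrow> rt x b = 1" using b unfolding blk_def by auto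
  define M where "M = nat (r' - r - 1)"
  have NM: "nat (r' - r) = Suc M" unfolding M_def using bk(6) by simp
  have rM: "r + 1 + int M = r'" unfolding M_def using bk(6) by simp
  let ?e = "\<lambda>m. e1 (V x c (r + 1 + int m))"
  let ?e' = "\<lambda>m. e1 (V x c' (r + 1 + int m))"
  have zc: "zV x c r r' = (\<Sum>m<M. 1 - ?e m) + (1 - e1 (V x c r'))"
    unfolding zV_def NM using rM by simp
  have zc': "zV x c' r r' = (1 - e1 (V x c' (r+1))) + (\<Sum>m<M. 1 - ?e' (Suc m))"
    unfolding zV_def NM sum.lessThan_Suc_shift by simp
  have inner: "\<And>m. m < M \<Longrightarrow> 1 + ?e m + (c' - c - 1) = int n + ?e' (Suc m)"
  proof -
    fix m assume m: "m < M"
    have "rt x (r + 1 + int m) = 1" using bk(7) m rM by simp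
    then have "1 + ?e m + (c' - c - 1) = int n + e1 (V x c' (r + 1 + int m + 1))"
      using R1row[OF v b] m rM by simp
    then show "1 + ?e m + (c' - c - 1) = int n + ?e' (Suc m)" by (simp add: algebra_simps)
  qed
  have e01: "\<And>b. e1 (V x c b) = 0 \<or> e1 (V x c b) = 1" using e1V01[OF v bk(1)] by blast
  have e01': "\<And>b. e1 (V x c' b) = 0 \<or> e1 (V x c' b) = 1" using e1V01[OF v bk(2)] by blast
  have row_r: "e1 (V x c r) + (c' - c - 1) = e1 (V x c' (r+1)) + int n" using Rrow[OF v b bk(4)] bk(6) by simp
  have row_r': "e1 (V x c r') + (c' - c - 1) = e1 (V x c' (r'+1)) + int n" using Rrow[OF v b bk(5)] bk(6) by simp
  show ?thesis
  proof (intro conjI impI)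
    assume g: "c' - c = int n"
    have eq: "?e' (Suc m) = ?e m" if m: "m < M" for m using inner[OF m] g by simp
    have s1: "(\<Sum>m<M. 1 - ?e' (Suc m)) = (\<Sum>m<M. 1 - ?e m)" using eq by (intro sum.cong) auto
    have a1: "e1 (V x c' (r+1)) = 0" using row_r g e01[of r] e01'[of "r+1"] by auto
    have a2: "e1 (V x c r') = 1" using row_r' g e01[of r'] e01'[of "r'+1"] by auto
    show "zV x c' r r' = zV x c r r' + 1" using zc zc' s1 a1 a2 by simp
    have "0 \<le> 1 - ?e m \<and> 1 - ?e m \<le> 1" for m using e01[of "r + 1 + int m"] by auto
    then have "0 \<le> (\<Sum>m<M. 1 - ?e m) \<and> (\<Sum>m<M. 1 - ?e m) \<le> (\<Sum>m<M. (1::int))"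
      by (intro conjI sum_nonneg sum_mono) auto
    then show "0 \<le> zV x c r r'" "zV x c r r' \<le> r' - r - 1" using zc a2 M_def bk(6) by auto
  next
    assume g: "c' - c = int n + 1"
    have z: "\<And>m. m < M \<Longrightarrow> ?e m = 0 \<and> ?e' (Suc m) = 1"
    proof -
      fix m assume m: "m < M"
      have "1 + ?e m + int n = int n + ?e' (Suc m)" using inner[OF m] g by simp
      then show "?e m = 0 \<and> ?e' (Suc m) = 1" using e01[of "r + 1 + int m"] e01'[of "r + 1 + int (Suc m)"] by auto
    qed
    have s1: "(\<Sum>m<M. 1 - ?e m) = (\<Sum>m<M. (1::int))" using z by (intro sum.cong) auto
    have s2: "(\<Sum>m<M. 1 - ?e' (Suc m)) = (\<Sum>m<M. (0::int))" using z by (intro sum.cong) auto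
    show "zV x c r r' = (r' - r) - e1 (V x c r')" using zc s1 M_def bk(6) by simp
    show "zV x c' r r' = 1 - e1 (V x c r)" using zc' s2 row_r g by simp
  qed
qed


lemma e1H01: "valids n x \<Longrightarrow> rt x b = 0 \<Longrightarrow> e1 (H x a b) = 0 \<or> e1 (H x a b) = 1"
  using e1V01[OF valids_tr, of n x b a] by (simp add: ct_tr V_tr)

lemma LR_W_intro: "1 \<le> i \<Longrightarrow> i \<le> int n \<Longrightarrow> 1 \<le> j \<Longrightarrow> j \<le> int n \<Longrightarrow> LR n (1,1,i+1) (1,1,j+1) (1,1,i) (1,1,j)"
  unfolding LR_def by simp
lemma LR_BGY_intro: "f \<in> {0,1} \<Longrightarrow> f' \<in> {0,1} \<Longrightarrow> 0 \<le> i \<Longrightarrow> i \<le> int n \<Longrightarrow>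
   LR n (0,f',i+1) (1,1,1+f) (0,f,i) (1,1,int n+f')"
  unfolding LR_def by simp
lemma LR_J_intro: "k \<in> {0,1} \<Longrightarrow> l \<in> {0,1} \<Longrightarrow> r \<in> {0,1} \<Longrightarrow> s \<in> {0,1} \<Longrightarrow>
   LR n (0,k,l) (0,r,s) (0,s,r+int n) (0,l,k+int n)"
  unfolding LR_def by simp

definition cc where "cc x = rr (tr x)"

definition lamV :: "nat \<Rightarrow> (int \<times> int \<Rightarrow> tile) \<Rightarrow> int \<Rightarrow> int \<Rightarrow> int \<Rightarrow> label" where
  "lamV n x c r r' = (if r' - r = int n then (1,1,zV x c r r' + 1) else (0, 1 - e1 (H x c r), zV x c r r'))"

definition Phi :: "nat \<Rightarrow> (int \<times> int \<Rightarrow> tile) \<Rightarrow> (int \<times> int \<Rightarrow> tile)" where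
  "Phi n x = (\<lambda>(p,q). (lamV n x (cc x (p+1)) (rr x q) (rr x (q+1)),
                       lamV n (tr x) (rr x (q+1)) (cc x p) (cc x (p+1)),
                       lamV n x (cc x p) (rr x q) (rr x (q+1)),
                       lamV n (tr x) (rr x q) (cc x p) (cc x (p+1))))"

lemma blk_LR_BGY:
  assumes v: "valids n x" and n: "n \<ge> 1" and b: "blk x c c' r r'" and g: "c' - c = int n" and h: "r' - r = int n + 1"
  shows "LR n (lamV n x c' r r') (lamV n (tr x) r' c c') (lamV n x c r r') (lamV n (tr x) r c c')"
proof -
  have bt: "blk (tr x) r r' c c'" using b blk_tr by simp
  note vi = VI[OF v n b] and hi = VI[OF valids_tr[OF v] n bt]
  have r0: "rt x r = 0" using b unfolding blk_def by simp
  have f1: "1 - e1 (H x c r) \<in> {0,1}" using e1H01[OF v r0, of c] by auto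
  have f2: "1 - e1 (H x c' r) \<in> {0,1}" using e1H01[OF v r0, of c'] by auto
  have z1: "zV x c' r r' = zV x c r r' + 1" "0 \<le> zV x c r r'" "zV x c r r' \<le> int n" using vi g h by auto
  have z2: "zV (tr x) r c c' = int n - e1 (H x c' r)" "zV (tr x) r' c c' = 1 - e1 (H x c r)"
    using hi g h by (auto simp: V_tr)
  have L: "lamV n x c r r' = (0, 1 - e1 (H x c r), zV x c r r')" unfolding lamV_def using h by simp
  have R: "lamV n x c' r r' = (0, 1 - e1 (H x c' r), zV x c r r' + 1)" unfolding lamV_def using h z1 by simp
  have Bo: "lamV n (tr x) r c c' = (1,1, int n + (1 - e1 (H x c' r)))" unfolding lamV_def using g z2 by simp
  have T: "lamV n (tr x) r' c c' = (1,1, 1 + (1 - e1 (H x c r)))" unfolding lamV_def using g z2 by simp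
  show ?thesis unfolding L R Bo T by (rule LR_BGY_intro[OF f1 f2 z1(2) z1(3)])
qed

lemma blk_LR_J:
  assumes v: "valids n x" and n: "n \<ge> 1" and b: "blk x c c' r r'" and g: "c' - c = int n + 1" and h: "r' - r = int n + 1"
  shows "LR n (lamV n x c' r r') (lamV n (tr x) r' c c') (lamV n x c r r') (lamV n (tr x) r c c')"
proof -
  have bt: "blk (tr x) r r' c c'" using b blk_tr by simp
  note vi = VI[OF v n b] and hi = VI[OF valids_tr[OF v] n bt]
  have bk: "rt x r = 0" "rt x r' = 0" "ct x c = 0" using b unfolding blk_def by auto
  have f1: "1 - e1 (H x c r) \<in> {0,1}" using e1H01[OF v bk(1), of c] by auto
  have f2: "1 - e1 (H x c' r) \<in> {0,1}" using e1H01[OF v bk(1), of c'] by auto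
  have f3: "1 - e1 (V x c r) \<in> {0,1}" using e1V01[OF v bk(3), of r] by auto
  have f4: "1 - e1 (V x c r') \<in> {0,1}" using e1V01[OF v bk(3), of r'] by auto
  have z1: "zV x c r r' = int n + 1 - e1 (V x c r')" "zV x c' r r' = 1 - e1 (V x c r)" using vi g h by auto
  have z2: "zV (tr x) r c c' = int n + 1 - e1 (H x c' r)" "zV (tr x) r' c c' = 1 - e1 (H x c r)"
    using hi g h by (auto simp: V_tr)
  have L: "lamV n x c r r' = (0, 1 - e1 (H x c r), (1 - e1 (V x c r')) + int n)" unfolding lamV_def using h n z1 by simp
  have R: "lamV n x c' r r' = (0, 1 - e1 (H x c' r), 1 - e1 (V x c r))" unfolding lamV_def using h z1 by simp
  have Bo: "lamV n (tr x) r c c' = (0, 1 - e1 (V x c r), (1 - e1 (H x c' r)) + int n)" unfolding lamV_def using g n z2 by (simp add: H_tr)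
  have T: "lamV n (tr x) r' c c' = (0, 1 - e1 (V x c r'), 1 - e1 (H x c r))" unfolding lamV_def using g z2 by (simp add: H_tr)
  show ?thesis unfolding L R Bo T by (rule LR_J_intro[OF f2 f3 f4 f1])
qed

lemma blk_LR_W:
  assumes v: "valids n x" and n: "n \<ge> 1" and b: "blk x c c' r r'" and g: "c' - c = int n" and h: "r' - r = int n"
  shows "LR n (lamV n x c' r r') (lamV n (tr x) r' c c') (lamV n x c r r') (lamV n (tr x) r c c')"
proof -
  have bt: "blk (tr x) r r' c c'" using b blk_tr by simp
  note vi = VI[OF v n b] and hi = VI[OF valids_tr[OF v] n bt]
  have z1: "zV x c' r r' = zV x c r r' + 1" "0 \<le> zV x c r r'" "zV x c r r' \<le> int n - 1" using vi g h by auto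
  have z2: "zV (tr x) r' c c' = zV (tr x) r c c' + 1" "0 \<le> zV (tr x) r c c'" "zV (tr x) r c c' \<le> int n - 1" using hi g h by auto
  have L: "lamV n x c r r' = (1,1,zV x c r r' + 1)" unfolding lamV_def using h by simp
  have R: "lamV n x c' r r' = (1,1,zV x c r r' + 1 + 1)" unfolding lamV_def using h z1 by simp
  have Bo: "lamV n (tr x) r c c' = (1,1,zV (tr x) r c c' + 1)" unfolding lamV_def using g by simp
  have T: "lamV n (tr x) r' c c' = (1,1,zV (tr x) r c c' + 1 + 1)" unfolding lamV_def using g z2 by simp
  show ?thesis unfolding L R Bo T by (rule LR_W_intro) (use z1 z2 in auto)
qed

lemma blk_LR:
  assumes v: "valids n x" and n: "n \<ge> 1" and b: "blk x c c' r r'"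
    and g: "c' - c = int n \<or> c' - c = int n + 1" and h: "r' - r = int n \<or> r' - r = int n + 1"
  shows "LR n (lamV n x c' r r') (lamV n (tr x) r' c c') (lamV n x c r r') (lamV n (tr x) r c c')"
proof -
  consider "c' - c = int n" "r' - r = int n" | "c' - c = int n" "r' - r = int n + 1"
    | "c' - c = int n + 1" "r' - r = int n" | "c' - c = int n + 1" "r' - r = int n + 1" using g h by blast
  then show ?thesis
  proof cases
    case 1 then show ?thesis using blk_LR_W[OF v n b] by blast
  next
    case 2 then show ?thesis using blk_LR_BGY[OF v n b] by blast
  next
    case 3
    have bt: "blk (tr x) r r' c c'" using b blk_tr by simp
    have "LR n (lamV n (tr x) r' c c') (lamV n (tr (tr x)) c' r r') (lamV n (tr x) r c c') (lamV n (tr (tr x)) c r r')"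
      using blk_LR_BGY[OF valids_tr[OF v] n bt] 3 by simp
    then show ?thesis using LR_hat tr_tr by metis
  next
    case 4 then show ?thesis using blk_LR_J[OF v n b] by blast
  qed
qed


lemma Phi_blk: assumes v: "valids n x" and n: "n \<ge> 1"
  shows "blk x (cc x p) (cc x (p+1)) (rr x q) (rr x (q+1))"
proof -
  have vt: "valids n (tr x)" using valids_tr[OF v] .
  have "ct x (cc x p) = 0" "ct x (cc x (p+1)) = 0" using rr0[OF vt n] unfolding cc_def by (simp_all add: rt_tr)
  moreover have "cc x p < cc x (p+1)" unfolding cc_def using rr_mono[OF vt n] by simp
  moreover have "\<forall>a. cc x p < a \<and> a < cc x (p+1) \<longrightarrow> ct x a = 1" unfolding cc_def using rr_between[OF vt n] by (auto simp: rt_tr)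
  moreover have "rt x (rr x q) = 0" "rt x (rr x (q+1)) = 0" using rr0[OF v n] by simp_all
  moreover have "rr x q < rr x (q+1)" using rr_mono[OF v n] by simp
  moreover have "\<forall>b. rr x q < b \<and> b < rr x (q+1) \<longrightarrow> rt x b = 1" using rr_between[OF v n] by blast
  ultimately show ?thesis unfolding blk_def by blast
qed

lemma Phi_valids: assumes v: "valids n x" and n: "n \<ge> 1" shows "valids n (Phi n x)"
proof -
  have vt: "valids n (tr x)" using valids_tr[OF v] .
  have "Phi n x (p,q) \<in> tstar n" for p q
  proof -
    have "LR n (lamV n x (cc x (p+1)) (rr x q) (rr x (q+1))) (lamV n (tr x) (rr x (q+1)) (cc x p) (cc x (p+1)))
             (lamV n x (cc x p) (rr x q) (rr x (q+1))) (lamV n (tr x) (rr x q) (cc x p) (cc x (p+1)))"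
      by (rule blk_LR[OF v n Phi_blk[OF v n]]) (use rr_gap[OF vt n, of p] rr_gap[OF v n, of q] in \<open>auto simp: cc_def\<close>)
    then show ?thesis unfolding Phi_def using LR_tstar by simp
  qed
  then have "\<forall>m. Phi n x m \<in> tstar n" by auto
  moreover have "\<forall>a b. RIGHT (Phi n x (a,b)) = LEFT (Phi n x (a+1,b)) \<and> TOP (Phi n x (a,b)) = BOTTOM (Phi n x (a,b+1))"
    unfolding Phi_def RIGHT_def LEFT_def TOP_def BOTTOM_def by simp
  ultimately show ?thesis unfolding valids_def by blast
qed

lemma rt_Phi: "rt (Phi n x) q = (if rr x (q+1) - rr x q = int n then 1 else 0)"
  unfolding rt_def H_def Phi_def LEFT_def lamV_def by simp

lemma descent: assumes n: "n \<ge> 1"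
  shows "k > 0 \<Longrightarrow> valids n x \<Longrightarrow> \<not> (\<forall>b. rt x (b + k) = rt x b)"
proof (induct "nat k" arbitrary: k x rule: less_induct)
  case less
  show ?case
  proof
    assume per: "\<forall>b. rt x (b + k) = rt x b"
    obtain K where K: "K > 0" "\<forall>q. rr x (q + K) = rr x q + k" "K < k"
      using per_K[OF less.prems(2) n less.prems(1)] per by blast
    have vy: "valids n (Phi n x)" using Phi_valids[OF less.prems(2) n] .
    have "\<forall>q. rt (Phi n x) (q + K) = rt (Phi n x) q"
    proof
      fix q
      have "rr x (q + K + 1) = rr x (q + 1) + k" using K(2)[rule_format, of "q+1"] by (simp add: algebra_simps)
      then show "rt (Phi n x) (q + K) = rt (Phi n x) q" using K(2) unfolding rt_Phi by simp
    qed
    moreover have "nat K < nat k" using K by simp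
    ultimately show False using less.hyps[of K "Phi n x"] K(1) vy by blast
  qed
qed

lemma aperiodic:
  assumes v: "valid n x" and n: "n \<ge> 1" and sh: "shift k x = x" and k: "k \<noteq> (0,0)"
  shows False
proof -
  have vs: "valids n x" using valid_valids[OF v] .
  obtain k1 k2 where kk: "k = (k1,k2)" by (cases k)
  have xs: "\<And>a b. x (a + k1, b + k2) = x (a, b)"
    using sh unfolding kk shift_def by (metis (mono_tags, lifting) case_prod_conv fst_conv snd_conv)
  show False
  proof (cases "k2 = 0")
    case False
    have p: "rt x (b + k2) = rt x b" for b
    proof -
      have "H x 0 (b + k2) = H x (-k1) b" unfolding H_def using xs[of "-k1" b] by simp
      then show ?thesis using H_e0[OF vs, of 0 "b + k2"] H_e0[OF vs, of "-k1" b] unfolding rt_def by simp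
    qed
    show False
    proof (cases "k2 > 0")
      case True then show False using descent[OF n True vs] p by blast
    next
      case False': False
      have "rt x (b + (-k2)) = rt x b" for b using p[of "b - k2"] by simp
      then show False using descent[OF n _ vs, of "-k2"] False False' by simp
    qed
  next
    case True
    then have k1: "k1 \<noteq> 0" using k kk by simp
    have vt: "valids n (tr x)" using valids_tr[OF vs] .
    have p: "rt (tr x) (a + k1) = rt (tr x) a" for a
    proof -
      have "V x (a + k1) 0 = V x a 0" unfolding V_def using xs[of a 0] True by simp
      then show ?thesis unfolding rt_tr ct_def by simp
    qed
    show False
    proof (cases "k1 > 0")
      case True then show False using descent[OF n True vt] p by blast
    next
      case False
      have "rt (tr x) (a + (-k1)) = rt (tr x) a" for a using p[of "a - k1"] by simp
      then show False using descent[OF n _ vt, of "-k1"] False k1 by simp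
    qed
  qed
qed

definition hh :: "nat \<Rightarrow> label \<Rightarrow> int" where "hh n L = int n - e0 L"
definition sg :: "label \<Rightarrow> int" where "sg L = 1 - e1 L + e0 L"
definition zz :: "label \<Rightarrow> int" where "zz L = e2 L - e0 L"
definition EE :: "label \<Rightarrow> int \<Rightarrow> int" where "EE L m = (if m > zz L then 1 else 0)"

definition HBrel :: "nat \<Rightarrow> tile \<Rightarrow> bool" where
  "HBrel n t \<longleftrightarrow> EE (BOTTOM t) (hh n (BOTTOM t) + 1) = sg (RIGHT t) \<and>
     sg (BOTTOM t) + hh n (BOTTOM t) = EE (RIGHT t) 1 + int n \<and>
     (\<forall>j. 1 \<le> j \<and> j \<le> hh n (LEFT t) \<longrightarrow> EE (LEFT t) j + hh n (BOTTOM t) + 1 = int n + EE (RIGHT t) (j+1))"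

lemmas dsimps = EE_def hh_def sg_def zz_def RIGHT_def LEFT_def BOTTOM_def TOP_def

lemma HBrel_W: "t \<in> W n \<Longrightarrow> HBrel n t"
proof -
  assume "t \<in> W n"
  then obtain i j where t: "t = ((1,1,i+1),(1,1,j+1),(1,1,i),(1,1,j))" "1 \<le> i" "i \<le> int n" "1 \<le> j" "j \<le> int n"
    unfolding W_def by blast
  show ?thesis unfolding HBrel_def t(1) using t(2-5) by (simp add: dsimps)
qed


lemma HBrel_B: "t \<in> B n \<Longrightarrow> HBrel n t"
proof -
  assume "t \<in> B n"
  then obtain i where t: "t = ((0,0,i+1),(1,1,1),(0,0,i),(1,1,int n))" "0 \<le> i" "i \<le> int n - 1"
    unfolding B_def by blast
  show ?thesis unfolding HBrel_def t(1) using t(2-3) by (simp add: dsimps)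
qed
lemma HBrel_G: "t \<in> G n \<Longrightarrow> HBrel n t"
proof -
  assume "t \<in> G n"
  then obtain i where t: "t = ((0,1,i+1),(1,1,1),(0,0,i),(1,1,int n+1))" "0 \<le> i" "i \<le> int n"
    unfolding G_def by blast
  show ?thesis unfolding HBrel_def t(1) using t(2-3) by (simp add: dsimps)
qed
lemma HBrel_Y: "t \<in> Y n \<Longrightarrow> HBrel n t"
proof -
  assume "t \<in> Y n"
  then obtain i where t: "t = ((0,1,i+1),(1,1,2),(0,1,i),(1,1,int n+1))" "1 \<le> i" "i \<le> int n"
    unfolding Y_def by blast
  show ?thesis unfolding HBrel_def t(1) using t(2-3) by (simp add: dsimps)
qed
lemma HBrel_hB: "t \<in> hat ` B n \<Longrightarrow> HBrel n t"
proof -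
  assume "t \<in> hat ` B n"
  then obtain i where t: "t = hat ((0,0,i+1),(1,1,1),(0,0,i),(1,1,int n))" "0 \<le> i" "i \<le> int n - 1"
    unfolding B_def by blast
  show ?thesis unfolding HBrel_def t(1) hat_def using t(2-3) by (simp add: dsimps)
qed
lemma HBrel_hG: "t \<in> hat ` G n \<Longrightarrow> HBrel n t"
proof -
  assume "t \<in> hat ` G n"
  then obtain i where t: "t = hat ((0,1,i+1),(1,1,1),(0,0,i),(1,1,int n+1))" "0 \<le> i" "i \<le> int n"
    unfolding G_def by blast
  show ?thesis unfolding HBrel_def t(1) hat_def using t(2-3) by (simp add: dsimps)
qed
lemma HBrel_hY: "t \<in> hat ` Y n \<Longrightarrow> HBrel n t"
proof -
  assume "t \<in> hat ` Y n"
  then obtain i where t: "t = hat ((0,1,i+1),(1,1,2),(0,1,i),(1,1,int n+1))" "1 \<le> i" "i \<le> int n"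
    unfolding Y_def by blast
  show ?thesis unfolding HBrel_def t(1) hat_def using t(2-3) by (simp add: dsimps)
qed


lemma HBrel_J: "t \<in> J n \<Longrightarrow> HBrel n t"
proof -
  assume "t \<in> J n"
  then obtain k l r s where t: "t = junction n k l r s" "(k,l) \<in> JP" "(r,s) \<in> JP"
    unfolding J_def by blast
  have kl: "k \<in> {0,1}" "l \<in> {0,1}" "r \<in> {0,1}" "s \<in> {0,1}" using t(2,3) unfolding JP_def by auto
  show ?thesis unfolding HBrel_def t(1) junction_def using kl by (auto simp: dsimps)
qed

lemma HBrel_tiles: "t \<in> tiles n \<Longrightarrow> HBrel n t"
  unfolding tiles_def
  apply (elim UnE)
  apply (erule HBrel_W) apply (erule HBrel_B) apply (erule HBrel_G) apply (erule HBrel_Y)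
  apply (erule HBrel_hB) apply (erule HBrel_hG) apply (erule HBrel_hY) apply (erule HBrel_J)
  done

lemma hat_hat: "hat (hat t) = t" by (cases t) (simp add: hat_def)

lemma tiles_hat: "t \<in> tiles n \<Longrightarrow> hat t \<in> tiles n"
proof -
  assume a: "t \<in> tiles n"
  have "hat ` W n \<subseteq> W n" unfolding W_def hat_def by auto
  moreover have "hat ` J n \<subseteq> J n"
  proof
    fix u assume "u \<in> hat ` J n"
    then obtain k l r s where "u = hat (junction n k l r s)" "(k,l) \<in> JP" "(r,s) \<in> JP"
       "junction n k l r s \<noteq> junction n 0 0 1 1" "junction n k l r s \<noteq> junction n 1 1 0 0"
      unfolding J_def by blast
    then show "u \<in> J n" unfolding J_def hat_def junction_def
      by (intro DiffI CollectI exI[of _ r] exI[of _ s] exI[of _ k] exI[of _ l]) auto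
  qed
  ultimately have hW: "\<And>u. u \<in> W n \<Longrightarrow> hat u \<in> W n" and hJ: "\<And>u. u \<in> J n \<Longrightarrow> hat u \<in> J n" by blast+
  have hh': "\<And>u S. u \<in> hat ` S \<Longrightarrow> hat u \<in> S" using hat_hat by (metis imageE)
  show ?thesis using a unfolding tiles_def
    apply (elim UnE)
    apply (drule hW, blast) apply (drule imageI[of _ _ hat], blast) apply (drule imageI[of _ _ hat], blast)
    apply (drule imageI[of _ _ hat], blast) apply (drule hh', blast) apply (drule hh', blast) apply (drule hh', blast)
    apply (drule hJ, blast)
    done
qed


definition goodL :: "nat \<Rightarrow> label \<Rightarrow> bool" where
  "goodL n L \<longleftrightarrow> (\<exists>v. L = (0,1,v) \<and> 1 \<le> v \<and> v \<le> int n + 1) \<or> (\<exists>v. L = (1,1,v) \<and> 1 \<le> v \<and> v \<le> int n + 1)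
     \<or> (\<exists>v. L = (0,0,v) \<and> 0 \<le> v \<and> v \<le> int n)"

definition tfacts :: "nat \<Rightarrow> tile \<Rightarrow> bool" where
  "tfacts n t \<longleftrightarrow> goodL n (LEFT t) \<and> goodL n (BOTTOM t) \<and> \<not> (sg (BOTTOM t) = 0 \<and> zz (LEFT t) = 0)"

lemma tf_W: "t \<in> W n \<Longrightarrow> tfacts n t"
proof -
  assume "t \<in> W n"
  then obtain i j where t: "t = ((1,1,i+1),(1,1,j+1),(1,1,i),(1,1,j))" "1 \<le> i" "i \<le> int n" "1 \<le> j" "j \<le> int n"
    unfolding W_def by blast
  show ?thesis unfolding tfacts_def goodL_def t(1) using t(2-5) by (simp add: dsimps)
qed
lemma tf_B: "t \<in> B n \<Longrightarrow> tfacts n t"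
proof -
  assume "t \<in> B n"
  then obtain i where t: "t = ((0,0,i+1),(1,1,1),(0,0,i),(1,1,int n))" "0 \<le> i" "i \<le> int n - 1"
    unfolding B_def by blast
  show ?thesis unfolding tfacts_def goodL_def t(1) using t(2-3) by (simp add: dsimps)
qed
lemma tf_G: "t \<in> G n \<Longrightarrow> tfacts n t"
proof -
  assume "t \<in> G n"
  then obtain i where t: "t = ((0,1,i+1),(1,1,1),(0,0,i),(1,1,int n+1))" "0 \<le> i" "i \<le> int n"
    unfolding G_def by blast
  show ?thesis unfolding tfacts_def goodL_def t(1) using t(2-3) by (simp add: dsimps)
qed
lemma tf_Y: "t \<in> Y n \<Longrightarrow> tfacts n t"
proof -
  assume "t \<in> Y n"
  then obtain i where t: "t = ((0,1,i+1),(1,1,2),(0,1,i),(1,1,int n+1))" "1 \<le> i" "i \<le> int n"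
    unfolding Y_def by blast
  show ?thesis unfolding tfacts_def goodL_def t(1) using t(2-3) by (simp add: dsimps)
qed
lemma tf_hB: "n \<ge> 1 \<Longrightarrow> t \<in> hat ` B n \<Longrightarrow> tfacts n t"
proof -
  assume n: "n \<ge> 1" and "t \<in> hat ` B n"
  then obtain i where t: "t = hat ((0,0,i+1),(1,1,1),(0,0,i),(1,1,int n))" "0 \<le> i" "i \<le> int n - 1"
    unfolding B_def by blast
  show ?thesis unfolding tfacts_def goodL_def t(1) hat_def using t(2-3) n by (simp add: dsimps)
qed
lemma tf_hG: "n \<ge> 1 \<Longrightarrow> t \<in> hat ` G n \<Longrightarrow> tfacts n t"
proof -
  assume n: "n \<ge> 1" and "t \<in> hat ` G n"
  then obtain i where t: "t = hat ((0,1,i+1),(1,1,1),(0,0,i),(1,1,int n+1))" "0 \<le> i" "i \<le> int n"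
    unfolding G_def by blast
  show ?thesis unfolding tfacts_def goodL_def t(1) hat_def using t(2-3) n by (simp add: dsimps)
qed
lemma tf_hY: "n \<ge> 1 \<Longrightarrow> t \<in> hat ` Y n \<Longrightarrow> tfacts n t"
proof -
  assume n: "n \<ge> 1" and "t \<in> hat ` Y n"
  then obtain i where t: "t = hat ((0,1,i+1),(1,1,2),(0,1,i),(1,1,int n+1))" "1 \<le> i" "i \<le> int n"
    unfolding Y_def by blast
  show ?thesis unfolding tfacts_def goodL_def t(1) hat_def using t(2-3) n by (simp add: dsimps)
qed
lemma tf_J: "n \<ge> 1 \<Longrightarrow> t \<in> J n \<Longrightarrow> tfacts n t"
proof -
  assume n: "n \<ge> 1" and "t \<in> J n"
  then obtain k l r s where t: "t = junction n k l r s" "(k,l) \<in> JP" "(r,s) \<in> JP"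
    unfolding J_def by blast
  have kl: "(k = 0 \<and> l = 0) \<or> (k = 0 \<and> l = 1) \<or> (k = 1 \<and> l = 1)" using t(2) unfolding JP_def by blast
  have rs: "(r = 0 \<and> s = 0) \<or> (r = 0 \<and> s = 1) \<or> (r = 1 \<and> s = 1)" using t(3) unfolding JP_def by blast
  show ?thesis unfolding tfacts_def goodL_def t(1) junction_def using kl rs n
    by (elim disjE conjE; simp add: dsimps)
qed

lemma tf_tiles: "n \<ge> 1 \<Longrightarrow> t \<in> tiles n \<Longrightarrow> tfacts n t"
  unfolding tiles_def
  apply (elim UnE)
  apply (erule tf_W) apply (erule tf_B) apply (erule tf_G) apply (erule tf_Y)
  apply (erule tf_hB, assumption) apply (erule tf_hG, assumption) apply (erule tf_hY, assumption) apply (erule tf_J, assumption)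
  done

lemma goodL_facts: "goodL n L \<Longrightarrow> (hh n L = int n \<or> hh n L = int n - 1) \<and> (sg L = 0 \<or> sg L = 1) \<and> 0 \<le> zz L \<and>
   sg L + zz L \<le> int n + 1 \<and> 1 \<le> sg L + zz L \<and> (zz L = 0 \<longrightarrow> sg L = 1)"
  unfolding goodL_def by (auto simp: dsimps)

definition cell :: "nat \<Rightarrow> tile \<Rightarrow> int \<Rightarrow> int \<Rightarrow> tile" where
  "cell n t i j = (let L = LEFT t; Bo = BOTTOM t; s = sg L; l = sg Bo in
     if i = 0 \<and> j = 0 then ((0, EE Bo 1, l), (0, EE L 1, s), (0, s, EE L 1 + int n), (0, l, EE Bo 1 + int n))
     else if i = 0 then ((1,1,1 + EE L j), (0, EE L (j+1), s + j), (1,1, int n + EE L (j+1)), (0, EE L j, s + j - 1))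
     else if j = 0 then ((0, EE Bo (i+1), l + i), (1,1,1 + EE Bo i), (0, EE Bo i, l + i - 1), (1,1,int n + EE Bo (i+1)))
     else ((1,1,EE L j + i + 1), (1,1, EE Bo i + j + 1), (1,1, EE L j + i), (1,1, EE Bo i + j)))"

lemma cell_hat: "cell n (hat t) j i = hat (cell n t i j)"
  unfolding cell_def Let_def hat_parts by (simp add: hat_def)

lemma CellH: "0 \<le> i \<Longrightarrow> RIGHT (cell n t i j) = LEFT (cell n t (i+1) j)"
  unfolding cell_def Let_def by (simp add: RIGHT_def LEFT_def)

lemma CellV: "0 \<le> j \<Longrightarrow> TOP (cell n t i j) = BOTTOM (cell n t i (j+1))"
proof -
  assume j: "0 \<le> j"
  have "TOP (cell n t i j) = RIGHT (hat (cell n t i j))" by (simp add: hat_parts)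
  also have "\<dots> = RIGHT (cell n (hat t) j i)" by (simp add: cell_hat)
  also have "\<dots> = LEFT (cell n (hat t) (j+1) i)" by (rule CellH[OF j])
  also have "\<dots> = BOTTOM (cell n t i (j+1))" by (simp add: cell_hat hat_parts)
  finally show ?thesis .
qed

lemma CellHB:
  assumes t: "t \<in> tiles n" and n: "n \<ge> 1" and tt: "RIGHT t = LEFT t'" and j: "0 \<le> j" "j \<le> hh n (LEFT t)"
  shows "RIGHT (cell n t (hh n (BOTTOM t)) j) = LEFT (cell n t' 0 j)"
proof -
  have hb: "HBrel n t" using HBrel_tiles[OF t] .
  have g: "hh n (BOTTOM t) \<ge> 0" using goodL_facts[of n "BOTTOM t"] tf_tiles[OF n t] n unfolding tfacts_def by auto
  show ?thesis
  proof (cases "j = 0")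
    case True then show ?thesis using hb g unfolding cell_def Let_def HBrel_def tt[symmetric]
      by (cases "hh n (BOTTOM t) = 0") (simp_all add: RIGHT_def LEFT_def)
  next
    case False
    then have "EE (LEFT t) j + hh n (BOTTOM t) + 1 = int n + EE (RIGHT t) (j+1)" using hb j unfolding HBrel_def by auto
    then show ?thesis using False g unfolding cell_def Let_def tt[symmetric]
      by (cases "hh n (BOTTOM t) = 0") (simp_all add: RIGHT_def LEFT_def)
  qed
qed

lemma CellVB:
  assumes t: "t \<in> tiles n" and n: "n \<ge> 1" and tt: "TOP t = BOTTOM t'" and i: "0 \<le> i" "i \<le> hh n (BOTTOM t)"
  shows "TOP (cell n t i (hh n (LEFT t))) = BOTTOM (cell n t' i 0)"
proof -
  have "RIGHT (cell n (hat t) (hh n (BOTTOM (hat t))) i) = LEFT (cell n (hat t') 0 i)"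
    by (rule CellHB[OF tiles_hat[OF t] n]) (use tt i in \<open>simp_all add: hat_parts\<close>)
  then show ?thesis by (simp add: cell_hat hat_parts)
qed


lemma EE01: "EE L m = 0 \<or> EE L m = 1" unfolding EE_def by simp

lemma CellBGY:
  assumes t: "t \<in> tiles n" and n: "n \<ge> 1" and i: "1 \<le> i" "i \<le> hh n (BOTTOM t)"
  shows "cell n t i 0 \<in> B n \<union> G n \<union> Y n"
proof -
  have gl: "goodL n (BOTTOM t)" using tf_tiles[OF n t] unfolding tfacts_def by blast
  note f = goodL_facts[OF gl]
  define l where "l = sg (BOTTOM t)"
  define z where "z = zz (BOTTOM t)"
  have c: "cell n t i 0 = ((0, EE (BOTTOM t) (i+1), l + i), (1,1,1 + EE (BOTTOM t) i), (0, EE (BOTTOM t) i, l + i - 1), (1,1,int n + EE (BOTTOM t) (i+1)))"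
    unfolding cell_def Let_def l_def using i by simp
  consider "i + 1 \<le> z" | "i = z" | "i > z" by linarith
  then show ?thesis
  proof cases
    case 1
    then have e: "EE (BOTTOM t) i = 0" "EE (BOTTOM t) (i+1) = 0" unfolding EE_def z_def by auto
    have "cell n t i 0 \<in> B n" unfolding c e B_def
      by (intro CollectI exI[of _ "l + i - 1"]) (use f 1 i in \<open>auto simp: l_def z_def\<close>)
    then show ?thesis by blast
  next
    case 2
    then have e: "EE (BOTTOM t) i = 0" "EE (BOTTOM t) (i+1) = 1" unfolding EE_def z_def by auto
    have "cell n t i 0 \<in> G n" unfolding c e G_def
      by (intro CollectI exI[of _ "l + i - 1"]) (use f 2 i in \<open>auto simp: l_def z_def\<close>)
    then show ?thesis by blast
  next
    case 3
    then have e: "EE (BOTTOM t) i = 1" "EE (BOTTOM t) (i+1) = 1" unfolding EE_def z_def by auto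
    have "cell n t i 0 \<in> Y n" unfolding c e Y_def
      by (intro CollectI exI[of _ "l + i - 1"]) (use f 3 i in \<open>auto simp: l_def z_def\<close>)
    then show ?thesis by blast
  qed
qed

lemma CellJ:
  assumes t: "t \<in> tiles n" and n: "n \<ge> 1"
  shows "cell n t 0 0 \<in> J n"
proof -
  have tf: "tfacts n t" using tf_tiles[OF n t] .
  have tf2: "tfacts n (hat t)" using tf_tiles[OF n tiles_hat[OF t]] .
  note fB = goodL_facts[of n "BOTTOM t"] and fL = goodL_facts[of n "LEFT t"]
  have gB: "goodL n (BOTTOM t)" and gL: "goodL n (LEFT t)" using tf unfolding tfacts_def by auto
  have x1: "\<not> (sg (BOTTOM t) = 0 \<and> zz (LEFT t) = 0)" using tf unfolding tfacts_def by auto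
  have x2: "\<not> (sg (LEFT t) = 0 \<and> zz (BOTTOM t) = 0)" using tf2 unfolding tfacts_def by (simp add: hat_parts)
  define k where "k = EE (BOTTOM t) 1"
  define l where "l = sg (BOTTOM t)"
  define r where "r = EE (LEFT t) 1"
  define s where "s = sg (LEFT t)"
  have c: "cell n t 0 0 = junction n k l r s" unfolding cell_def Let_def junction_def k_def l_def r_def s_def by simp
  have kl: "(k,l) \<in> JP" using fB[OF gB] unfolding JP_def k_def l_def EE_def by auto
  have rs: "(r,s) \<in> JP" using fL[OF gL] unfolding JP_def r_def s_def EE_def by auto
  have ne1: "junction n k l r s \<noteq> junction n 0 0 1 1"
    using x1 fL[OF gL] unfolding junction_def k_def l_def r_def s_def EE_def by auto
  have ne2: "junction n k l r s \<noteq> junction n 1 1 0 0"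
    using x2 fB[OF gB] unfolding junction_def k_def l_def r_def s_def EE_def by auto
  show ?thesis unfolding c J_def using kl rs ne1 ne2 by blast
qed

lemma CellW:
  assumes t: "t \<in> tiles n" and n: "n \<ge> 1" and i: "1 \<le> i" "i \<le> hh n (BOTTOM t)" and j: "1 \<le> j" "j \<le> hh n (LEFT t)"
  shows "cell n t i j \<in> W n"
proof -
  have h1: "EE (LEFT t) j + hh n (BOTTOM t) + 1 = int n + EE (RIGHT t) (j+1)"
    using HBrel_tiles[OF t] j unfolding HBrel_def by auto
  have h2: "EE (BOTTOM t) i + hh n (LEFT t) + 1 = int n + EE (TOP t) (i+1)"
    using HBrel_tiles[OF tiles_hat[OF t]] i unfolding HBrel_def by (auto simp: hat_parts)
  have c: "cell n t i j = ((1,1,EE (LEFT t) j + i + 1), (1,1, EE (BOTTOM t) i + j + 1), (1,1, EE (LEFT t) j + i), (1,1, EE (BOTTOM t) i + j))"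
    unfolding cell_def Let_def using i j by simp
  show ?thesis unfolding c W_def
    by (intro CollectI exI[of _ "EE (LEFT t) j + i"] exI[of _ "EE (BOTTOM t) i + j"])
       (use h1 h2 i j EE01[of "LEFT t" j] EE01[of "BOTTOM t" i] EE01[of "RIGHT t" "j+1"] EE01[of "TOP t" "i+1"] in auto)
qed

lemma CellMem:
  assumes t: "t \<in> tiles n" and n: "n \<ge> 1" and i: "0 \<le> i" "i \<le> hh n (BOTTOM t)" and j: "0 \<le> j" "j \<le> hh n (LEFT t)"
  shows "cell n t i j \<in> tiles n"
proof -
  consider "i = 0" "j = 0" | "i = 0" "j \<ge> 1" | "i \<ge> 1" "j = 0" | "i \<ge> 1" "j \<ge> 1" using i j by linarith
  then show ?thesis
  proof cases
    case 1 then show ?thesis using CellJ[OF t n] unfolding tiles_def by blast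
  next
    case 2
    have "cell n (hat t) j 0 \<in> B n \<union> G n \<union> Y n"
      by (rule CellBGY[OF tiles_hat[OF t] n]) (use 2 j in \<open>simp_all add: hat_parts\<close>)
    then have "hat (cell n (hat t) j 0) \<in> hat ` B n \<union> hat ` G n \<union> hat ` Y n" by blast
    moreover have "hat (cell n (hat t) j 0) = cell n t 0 j" using cell_hat[of n t j 0] 2 by (simp add: hat_hat)
    ultimately have "cell n t 0 j \<in> tiles n" unfolding tiles_def by auto
    then show ?thesis using 2 by simp
  next
    case 3 then show ?thesis using CellBGY[OF t n _ i(2)] unfolding tiles_def by blast
  next
    case 4 then show ?thesis using CellW[OF t n _ i(2) _ j(2)] unfolding tiles_def by blast
  qed
qed

lemma tr_tr2: "tr (tr x) = x" unfolding tr_def hat_def by (auto simp: fun_eq_iff split: prod.splits)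

lemma tile_e0: "t \<in> tiles n \<Longrightarrow> e0 (TOP t) = e0 (BOTTOM t) \<and> e0 (RIGHT t) = e0 (LEFT t) \<and> (e0 (LEFT t) = 0 \<or> e0 (LEFT t) = 1) \<and> (e0 (BOTTOM t) = 0 \<or> e0 (BOTTOM t) = 1)"
proof -
  assume "t \<in> tiles n"
  then have "t \<in> tstar n" using tiles_sub by blast
  then have "LR n (RIGHT t) (TOP t) (LEFT t) (BOTTOM t)" using tstar_LR tile_eq by metis
  then show ?thesis using LR_e0 by blast
qed

definition wd :: "nat \<Rightarrow> (int \<times> int \<Rightarrow> tile) \<Rightarrow> int \<Rightarrow> int" where
  "wd n x p = (if e0 (BOTTOM (x (p,0))) = 1 then int n else int n + 1)"
definition XX :: "nat \<Rightarrow> (int \<times> int \<Rightarrow> tile) \<Rightarrow> nat \<Rightarrow> int" where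
  "XX n x p = (\<Sum>i<p. wd n x (int i))"
definition PP :: "nat \<Rightarrow> (int \<times> int \<Rightarrow> tile) \<Rightarrow> int \<Rightarrow> nat" where
  "PP n x a = (LEAST p. a < XX n x (Suc p))"

lemma XX_Suc: "XX n x (Suc p) = XX n x p + wd n x (int p)" unfolding XX_def by simp
lemma XX_0: "XX n x 0 = 0" unfolding XX_def by simp
lemma wd_ge: "n \<ge> 1 \<Longrightarrow> wd n x p \<ge> 1" unfolding wd_def by auto

lemma XX_ge: "n \<ge> 1 \<Longrightarrow> XX n x p \<ge> int p"
proof (induct p)
  case 0 then show ?case by (simp add: XX_0)
next
  case (Suc p) then show ?case using wd_ge[of n x "int p"] by (simp add: XX_Suc)
qed

lemma XX_mono: "n \<ge> 1 \<Longrightarrow> p < p' \<Longrightarrow> XX n x p < XX n x p'"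
proof (induct p')
  case 0 then show ?case by simp
next
  case (Suc p')
  have "XX n x p' < XX n x (Suc p')" using wd_ge[OF Suc.prems(1), of x "int p'"] by (simp add: XX_Suc)
  then show ?case using Suc by (cases "p = p'") auto
qed

lemma XX_le_mono: "n \<ge> 1 \<Longrightarrow> p \<le> p' \<Longrightarrow> XX n x p \<le> XX n x p'"
  using XX_mono[where n=n and p=p and p'=p' and x=x] by (cases "p = p'") auto

lemma PP_spec: assumes n: "n \<ge> 1" and a: "0 \<le> a"
  shows "XX n x (PP n x a) \<le> a \<and> a < XX n x (Suc (PP n x a))"
proof -
  have ex: "a < XX n x (Suc (nat a))" using XX_ge[OF n, where x=x and p="Suc (nat a)"] a by simp
  have 1: "a < XX n x (Suc (PP n x a))" unfolding PP_def by (rule LeastI[of _ "nat a"], rule ex)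
  have 2: "XX n x (PP n x a) \<le> a"
  proof (cases "PP n x a")
    case 0 then show ?thesis using a XX_0 by simp
  next
    case (Suc p)
    then have "\<not> a < XX n x (Suc p)" using not_less_Least[of p "\<lambda>p. a < XX n x (Suc p)"] unfolding PP_def by simp
    then show ?thesis using Suc by simp
  qed
  show ?thesis using 1 2 by blast
qed

lemma PP_unique: assumes n: "n \<ge> 1" and a: "XX n x p \<le> a" "a < XX n x (Suc p)" shows "PP n x a = p"
proof -
  have a0: "0 \<le> a" using a XX_ge[OF n, where x=x and p=p] by simp
  note s = PP_spec[OF n a0, of x]
  show ?thesis
  proof (rule ccontr)
    assume "PP n x a \<noteq> p"
    then consider "PP n x a < p" | "p < PP n x a" by linarith
    then show False
    proof cases
      case 1 then have "Suc (PP n x a) \<le> p" by simp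
      then have "XX n x (Suc (PP n x a)) \<le> XX n x p" by (rule XX_le_mono[OF n])
      then show False using s a by simp
    next
      case 2 then have "Suc p \<le> PP n x a" by simp
      then have "XX n x (Suc p) \<le> XX n x (PP n x a)" by (rule XX_le_mono[OF n])
      then show False using s a by simp
    qed
  qed
qed

lemma PP_lt: assumes n: "n \<ge> 1" and a: "0 \<le> a" "a < XX n x Wd" shows "PP n x a < Wd"
proof (rule ccontr)
  assume "\<not> PP n x a < Wd"
  then have "XX n x Wd \<le> XX n x (PP n x a)" using XX_le_mono[OF n] by simp
  then show False using PP_spec[OF n a(1), of x] a by simp
qed

definition om :: "nat \<Rightarrow> (int \<times> int \<Rightarrow> tile) \<Rightarrow> (int \<times> int \<Rightarrow> tile)" where
  "om n x = (\<lambda>(a,b). cell n (x (int (PP n x a), int (PP n (tr x) b))) (a - XX n x (PP n x a)) (b - XX n (tr x) (PP n (tr x) b)))"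

lemma om_tr: "om n (tr x) = tr (om n x)"
proof (rule ext, clarify)
  fix a b
  have "om n (tr x) (a,b) = cell n (tr x (int (PP n (tr x) a), int (PP n (tr (tr x)) b)))
      (a - XX n (tr x) (PP n (tr x) a)) (b - XX n (tr (tr x)) (PP n (tr (tr x)) b))" unfolding om_def by simp
  also have "\<dots> = cell n (hat (x (int (PP n x b), int (PP n (tr x) a))))
      (a - XX n (tr x) (PP n (tr x) a)) (b - XX n x (PP n x b))" unfolding tr_tr2 by (simp add: tr_def)
  also have "\<dots> = hat (cell n (x (int (PP n x b), int (PP n (tr x) a))) (b - XX n x (PP n x b)) (a - XX n (tr x) (PP n (tr x) a)))"
    by (simp add: cell_hat)
  also have "\<dots> = tr (om n x) (a,b)" unfolding om_def tr_def by simp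
  finally show "om n (tr x) (a,b) = tr (om n x) (a,b)" .
qed

definition vrect :: "nat \<Rightarrow> (int \<times> int \<Rightarrow> tile) \<Rightarrow> nat \<Rightarrow> nat \<Rightarrow> bool" where
  "vrect n x Wd Ht \<longleftrightarrow> (\<forall>a b. 0 \<le> a \<and> a < int Wd \<and> 0 \<le> b \<and> b < int Ht \<longrightarrow> x (a,b) \<in> tiles n) \<and>
     (\<forall>a b. 0 \<le> a \<and> a + 1 < int Wd \<and> 0 \<le> b \<and> b < int Ht \<longrightarrow> RIGHT (x (a,b)) = LEFT (x (a+1,b))) \<and>
     (\<forall>a b. 0 \<le> a \<and> a < int Wd \<and> 0 \<le> b \<and> b + 1 < int Ht \<longrightarrow> TOP (x (a,b)) = BOTTOM (x (a,b+1)))"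

lemma vrect_tr: "vrect n x Wd Ht \<Longrightarrow> vrect n (tr x) Ht Wd"
  unfolding vrect_def tr_def by (auto simp: hat_parts tiles_hat)

lemma col_unif: assumes v: "vrect n x Wd Ht" and p: "0 \<le> p" "p < int Wd"
  shows "q < Ht \<Longrightarrow> e0 (BOTTOM (x (p, int q))) = e0 (BOTTOM (x (p,0)))"
proof (induct q)
  case 0 then show ?case by simp
next
  case (Suc q)
  have t: "x (p, int q) \<in> tiles n" using v p Suc.prems unfolding vrect_def by simp
  have "TOP (x (p, int q)) = BOTTOM (x (p, int q + 1))" using v p Suc.prems unfolding vrect_def by simp
  then show ?case using Suc tile_e0[OF t] by (simp add: add.commute)
qed

lemma hh_wd: assumes v: "vrect n x Wd Ht" and p: "0 \<le> p" "p < int Wd" and q: "0 \<le> q" "q < int Ht"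
  shows "hh n (BOTTOM (x (p,q))) + 1 = wd n x p"
proof -
  have t: "x (p, q) \<in> tiles n" using v p q unfolding vrect_def by simp
  have "e0 (BOTTOM (x (p, int (nat q)))) = e0 (BOTTOM (x (p,0)))" using col_unif[OF v p, of "nat q"] q by simp
  then show ?thesis using tile_e0[OF t] q unfolding wd_def hh_def by auto
qed


lemma hh_ht: assumes v: "vrect n x Wd Ht" and p: "0 \<le> p" "p < int Wd" and q: "0 \<le> q" "q < int Ht"
  shows "hh n (LEFT (x (p,q))) + 1 = wd n (tr x) q"
  using hh_wd[OF vrect_tr[OF v] q p] by (simp add: tr_def hat_parts)

lemma om_cell: assumes n: "n \<ge> 1" and v: "vrect n x Wd Ht" and a: "0 \<le> a" "a < XX n x Wd" and b: "0 \<le> b" "b < XX n (tr x) Ht"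
  shows "x (int (PP n x a), int (PP n (tr x) b)) \<in> tiles n \<and>
    0 \<le> a - XX n x (PP n x a) \<and> a - XX n x (PP n x a) \<le> hh n (BOTTOM (x (int (PP n x a), int (PP n (tr x) b)))) \<and>
    0 \<le> b - XX n (tr x) (PP n (tr x) b) \<and> b - XX n (tr x) (PP n (tr x) b) \<le> hh n (LEFT (x (int (PP n x a), int (PP n (tr x) b)))) \<and>
    int (PP n x a) < int Wd \<and> int (PP n (tr x) b) < int Ht"
proof -
  have pw: "PP n x a < Wd" using PP_lt[OF n a] .
  have qh: "PP n (tr x) b < Ht" using PP_lt[OF n b] .
  have t: "x (int (PP n x a), int (PP n (tr x) b)) \<in> tiles n" using v pw qh unfolding vrect_def by simp
  have s1: "XX n x (PP n x a) \<le> a \<and> a < XX n x (PP n x a) + wd n x (int (PP n x a))"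
    using PP_spec[OF n a(1), of x] by (simp add: XX_Suc)
  have s2: "XX n (tr x) (PP n (tr x) b) \<le> b \<and> b < XX n (tr x) (PP n (tr x) b) + wd n (tr x) (int (PP n (tr x) b))"
    using PP_spec[OF n b(1), of "tr x"] by (simp add: XX_Suc)
  have h1: "hh n (BOTTOM (x (int (PP n x a), int (PP n (tr x) b)))) + 1 = wd n x (int (PP n x a))"
    using hh_wd[OF v] pw qh by simp
  have h2: "hh n (LEFT (x (int (PP n x a), int (PP n (tr x) b)))) + 1 = wd n (tr x) (int (PP n (tr x) b))"
    using hh_ht[OF v] pw qh by simp
  show ?thesis using t s1 s2 h1 h2 pw qh by auto
qed

lemma om_mem: assumes n: "n \<ge> 1" and v: "vrect n x Wd Ht" and a: "0 \<le> a" "a < XX n x Wd" and b: "0 \<le> b" "b < XX n (tr x) Ht"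
  shows "om n x (a,b) \<in> tiles n"
  using om_cell[OF n v a b] CellMem[OF _ n] unfolding om_def by simp

lemma om_h: assumes n: "n \<ge> 1" and v: "vrect n x Wd Ht" and a: "0 \<le> a" "a + 1 < XX n x Wd" and b: "0 \<le> b" "b < XX n (tr x) Ht"
  shows "RIGHT (om n x (a,b)) = LEFT (om n x (a+1,b))"
proof -
  define p where "p = PP n x a"
  define q where "q = PP n (tr x) b"
  define t where "t = x (int p, int q)"
  have a': "a < XX n x Wd" using a by simp
  note oc = om_cell[OF n v a(1) a' b, folded p_def q_def t_def]
  have s1: "XX n x p \<le> a \<and> a < XX n x (Suc p)" using PP_spec[OF n a(1), of x] unfolding p_def by simp
  have oma: "om n x (a,b) = cell n t (a - XX n x p) (b - XX n (tr x) q)" unfolding om_def p_def q_def t_def by simp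
  show ?thesis
  proof (cases "a + 1 < XX n x (Suc p)")
    case True
    have "PP n x (a+1) = p" by (rule PP_unique[OF n]) (use s1 True in auto)
    then have "om n x (a+1,b) = cell n t (a + 1 - XX n x p) (b - XX n (tr x) q)" unfolding om_def p_def q_def t_def by simp
    then show ?thesis using oma CellH[of "a - XX n x p" n t] oc by (simp add: algebra_simps)
  next
    case False
    then have eq: "a + 1 = XX n x (Suc p)" using s1 by simp
    have "PP n x (a+1) = Suc p"
      by (rule PP_unique[OF n]) (use eq wd_ge[OF n, of x "int (Suc p)"] in \<open>auto simp: XX_Suc\<close>)
    moreover have sp: "Suc p < Wd" using PP_lt[OF n _ a(2)] `PP n x (a+1) = Suc p` a by simp
    ultimately have om2: "om n x (a+1,b) = cell n (x (int (Suc p), int q)) 0 (b - XX n (tr x) q)"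
      unfolding om_def q_def using eq by simp
    have rl: "RIGHT t = LEFT (x (int (Suc p), int q))" using v sp oc unfolding vrect_def t_def by (simp add: add.commute)
    have w: "hh n (BOTTOM t) + 1 = wd n x (int p)" using hh_wd[OF v, of "int p" "int q"] oc unfolding t_def by simp
    have i: "a - XX n x p = hh n (BOTTOM t)" using eq w by (simp add: XX_Suc)
    show ?thesis unfolding oma om2 i by (rule CellHB) (use oc rl n in \<open>simp_all add: t_def\<close>)
  qed
qed

lemma om_v: assumes n: "n \<ge> 1" and v: "vrect n x Wd Ht" and a: "0 \<le> a" "a < XX n x Wd" and b: "0 \<le> b" "b + 1 < XX n (tr x) Ht"
  shows "TOP (om n x (a,b)) = BOTTOM (om n x (a,b+1))"
proof -
  have "RIGHT (om n (tr x) (b,a)) = LEFT (om n (tr x) (b+1,a))"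
    by (rule om_h[OF n vrect_tr[OF v]]) (use a b in \<open>simp_all add: tr_tr2\<close>)
  then show ?thesis unfolding om_tr by (simp add: tr_def hat_parts)
qed

lemma om_vrect: assumes n: "n \<ge> 1" and v: "vrect n x Wd Ht"
  shows "vrect n (om n x) (nat (XX n x Wd)) (nat (XX n (tr x) Ht))"
  unfolding vrect_def using om_mem[OF n v] om_h[OF n v] om_v[OF n v] by auto

lemma om_00: assumes n: "n \<ge> 1" shows "om n x (0,0) = cell n (x (0,0)) 0 0"
proof -
  have "PP n y 0 = 0" for y by (rule PP_unique[OF n]) (use wd_ge[OF n, of y 0] in \<open>simp_all add: XX_Suc XX_0\<close>)
  then show ?thesis unfolding om_def by (simp add: XX_0)
qed

lemma XX_grow: assumes n: "n \<ge> 1" and e: "e0 (BOTTOM (x (0,0))) = 0" shows "Wd \<ge> 1 \<Longrightarrow> XX n x Wd \<ge> int Wd + 1"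
proof (induct Wd)
  case 0 then show ?case by simp
next
  case (Suc w)
  show ?case
  proof (cases w)
    case 0 then show ?thesis using e n by (simp add: XX_Suc XX_0 wd_def)
  next
    case (Suc w') then show ?thesis using Suc.hyps wd_ge[OF n, of x "int w"] by (simp add: XX_Suc)
  qed
qed

lemma vrect_mono: "vrect n x w h \<Longrightarrow> w' \<le> w \<Longrightarrow> h' \<le> h \<Longrightarrow> vrect n x w' h'"
  unfolding vrect_def by force

definition j0 :: "nat \<Rightarrow> tile" where "j0 n = junction n 0 0 0 0"

lemma j0_tiles: "j0 n \<in> tiles n"
proof -
  have "j0 n \<in> J n" unfolding J_def JP_def j0_def junction_def by auto
  then show ?thesis unfolding tiles_def by blast
qed

fun itr :: "nat \<Rightarrow> nat \<Rightarrow> (int \<times> int \<Rightarrow> tile) \<times> nat \<times> nat" where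
  "itr n 0 = ((\<lambda>_. j0 n), 1, 1)"
| "itr n (Suc k) = (case itr n k of (x, w, h) \<Rightarrow> (om n x, nat (XX n x w), nat (XX n (tr x) h)))"

lemma itr_props: assumes n: "n \<ge> 1"
  shows "case itr n k of (x,w,h) \<Rightarrow> vrect n x w h \<and> w \<ge> k+1 \<and> h \<ge> k+1 \<and> e0 (LEFT (x (0,0))) = 0 \<and> e0 (BOTTOM (x (0,0))) = 0"
proof (induct k)
  case 0
  have "vrect n (\<lambda>_. j0 n) 1 1" unfolding vrect_def using j0_tiles by auto
  then show ?case by (simp add: j0_def junction_def LEFT_def BOTTOM_def)
next
  case (Suc k)
  obtain x w h where xwh: "itr n k = (x,w,h)" by (cases "itr n k") auto
  have IH: "vrect n x w h" "w \<ge> k+1" "h \<ge> k+1" "e0 (LEFT (x (0,0))) = 0" "e0 (BOTTOM (x (0,0))) = 0"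
    using Suc xwh by auto
  have v': "vrect n (om n x) (nat (XX n x w)) (nat (XX n (tr x) h))" by (rule om_vrect[OF n IH(1)])
  have g1: "XX n x w \<ge> int w + 1" by (rule XX_grow[where x=x, OF n IH(5)]) (use IH(2) in simp)
  have e4: "e0 (BOTTOM (tr x (0,0))) = 0" using IH(4) by (simp add: tr_def hat_parts)
  have g2: "XX n (tr x) h \<ge> int h + 1" by (rule XX_grow[where x="tr x", OF n e4]) (use IH(3) in simp)
  have c: "om n x (0,0) = cell n (x (0,0)) 0 0" by (rule om_00[OF n])
  have e: "e0 (LEFT (om n x (0,0))) = 0" "e0 (BOTTOM (om n x (0,0))) = 0"
    unfolding c cell_def Let_def by (simp_all add: LEFT_def BOTTOM_def)
  have "Suc (Suc k) \<le> nat (XX n x w)" "Suc (Suc k) \<le> nat (XX n (tr x) h)" using g1 g2 IH(2,3) by linarith+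
  then show ?case using xwh v' e by simp
qed

lemma big_patches: assumes n: "n \<ge> 1" shows "\<exists>x. vrect n x N N"
proof -
  obtain x w h where xwh: "itr n N = (x,w,h)" by (cases "itr n N") auto
  then have "vrect n x w h" "w \<ge> N+1" "h \<ge> N+1" using itr_props[OF n, of N] by auto
  then show ?thesis using vrect_mono by (metis le_SucI le_add1 le_trans Suc_eq_plus1)
qed

definition LS :: "nat \<Rightarrow> label set" where "LS n = {0,1} \<times> {0,1} \<times> {0..int n + 2}"

lemma LR_LS0: "LR n (r0,r1,r2) (t0,t1,t2) (l0,l1,l2) (u0,u1,u2) \<Longrightarrow>
   (r0,r1,r2) \<in> LS n \<and> (t0,t1,t2) \<in> LS n \<and> (l0,l1,l2) \<in> LS n \<and> (u0,u1,u2) \<in> LS n"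
  unfolding LR_def LS_def by (elim disjE conjE) auto

lemma LR_LS: "LR n R T L Bo \<Longrightarrow> R \<in> LS n \<and> T \<in> LS n \<and> L \<in> LS n \<and> Bo \<in> LS n"
  using LR_LS0 by (cases R; cases T; cases L; cases Bo) blast

lemma finite_tiles: "finite (tiles n)"
proof -
  have "tiles n \<subseteq> LS n \<times> LS n \<times> LS n \<times> LS n"
  proof
    fix t assume "t \<in> tiles n"
    then have "t \<in> tstar n" using tiles_sub by blast
    then have "LR n (RIGHT t) (TOP t) (LEFT t) (BOTTOM t)" using tstar_LR tile_eq by metis
    then have "RIGHT t \<in> LS n" "TOP t \<in> LS n" "LEFT t \<in> LS n" "BOTTOM t \<in> LS n" using LR_LS by blast+
    then have "(RIGHT t, TOP t, LEFT t, BOTTOM t) \<in> LS n \<times> LS n \<times> LS n \<times> LS n" by blast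
    then show "t \<in> LS n \<times> LS n \<times> LS n \<times> LS n" using tile_eq[of t] by simp
  qed
  moreover have "finite (LS n)" unfolding LS_def by simp
  ultimately show ?thesis using finite_subset by blast
qed

definition box :: "nat \<Rightarrow> (int \<times> int) set" where "box N = {-int N..<int N} \<times> {-int N..<int N}"

definition vbox :: "nat \<Rightarrow> (int \<times> int \<Rightarrow> tile) \<Rightarrow> nat \<Rightarrow> bool" where
  "vbox n y N \<longleftrightarrow> (\<forall>m. m \<in> box N \<longrightarrow> y m \<in> tiles n) \<and>
    (\<forall>a b. (a,b) \<in> box N \<and> (a+1,b) \<in> box N \<longrightarrow> RIGHT (y (a,b)) = LEFT (y (a+1,b))) \<and>
    (\<forall>a b. (a,b) \<in> box N \<and> (a,b+1) \<in> box N \<longrightarrow> TOP (y (a,b)) = BOTTOM (y (a,b+1)))"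

lemma box_mono: "N \<le> M \<Longrightarrow> box N \<subseteq> box M" unfolding box_def by auto

lemma vbox_mono: "vbox n y M \<Longrightarrow> N \<le> M \<Longrightarrow> vbox n y N"
  unfolding vbox_def using box_mono by blast

lemma vbox_exists: assumes n: "n \<ge> 1" shows "\<exists>y. vbox n y N"
proof -
  obtain x where x: "vrect n x (2*N) (2*N)" using big_patches[OF n] by blast
  define y where "y = (\<lambda>(a,b). x (a + int N, b + int N))"
  have m: "\<And>a b. (a,b) \<in> box N \<Longrightarrow> 0 \<le> a + int N \<and> a + int N < int (2*N) \<and> 0 \<le> b + int N \<and> b + int N < int (2*N)"
    unfolding box_def by auto
  have "vbox n y N" unfolding vbox_def
  proof (intro conjI allI impI)
    fix m assume "m \<in> box N"
    then obtain a b where ab: "m = (a,b)" "(a,b) \<in> box N" by (cases m) auto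
    show "y m \<in> tiles n" using x m[OF ab(2)] unfolding vrect_def y_def ab(1) by simp
  next
    fix a b assume ab: "(a,b) \<in> box N \<and> (a+1,b) \<in> box N"
    show "RIGHT (y (a,b)) = LEFT (y (a+1,b))" using x m[of a b] m[of "a+1" b] ab unfolding vrect_def y_def
      by (simp add: algebra_simps)
  next
    fix a b assume ab: "(a,b) \<in> box N \<and> (a,b+1) \<in> box N"
    show "TOP (y (a,b)) = BOTTOM (y (a,b+1))" using x m[of a b] m[of a "b+1"] ab unfolding vrect_def y_def
      by (simp add: algebra_simps)
  qed
  then show ?thesis by blast
qed

definition Good :: "nat \<Rightarrow> nat \<Rightarrow> (int \<times> int \<Rightarrow> tile) \<Rightarrow> bool" where
  "Good n N p \<longleftrightarrow> (\<forall>M\<ge>N. \<exists>y. vbox n y M \<and> restrict y (box N) = p)"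

lemma Good0: assumes n: "n \<ge> 1" shows "Good n 0 (\<lambda>_. undefined)"
  unfolding Good_def using vbox_exists[OF n] by (auto simp: box_def restrict_def)

lemma Gstep: assumes G: "Good n N p" shows "\<exists>p'. Good n (Suc N) p' \<and> restrict p' (box N) = p"
proof -
  define y where "y = (\<lambda>M. SOME y. vbox n y M \<and> restrict y (box N) = p)"
  have y: "vbox n (y M) M \<and> restrict (y M) (box N) = p" if M: "M \<ge> N" for M
  proof -
    have "\<exists>y. vbox n y M \<and> restrict y (box N) = p" using G M unfolding Good_def by blast
    then show ?thesis unfolding y_def by (rule someI_ex)
  qed
  define A where "A = {M. M \<ge> Suc N}"
  define f where "f = (\<lambda>M. restrict (y M) (box (Suc N)))"
  have infA: "\<not> finite A" unfolding A_def infinite_nat_iff_unbounded_le by (metis le_add2 le_trans mem_Collect_eq add.commute)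
  have "f ` A \<subseteq> (\<Pi>\<^sub>E m \<in> box (Suc N). tiles n)"
  proof
    fix u assume "u \<in> f ` A"
    then obtain M where M: "M \<ge> Suc N" "u = f M" unfolding A_def by auto
    have "vbox n (y M) M" using y[of M] M by simp
    then have "vbox n (y M) (Suc N)" using vbox_mono M(1) by blast
    then show "u \<in> (\<Pi>\<^sub>E m \<in> box (Suc N). tiles n)" unfolding M f_def vbox_def by auto
  qed
  moreover have "finite (\<Pi>\<^sub>E m \<in> box (Suc N). tiles n)"
    by (rule finite_PiE) (auto simp: box_def finite_tiles)
  ultimately have finf: "finite (f ` A)" using finite_subset by blast
  obtain M0 where M0: "M0 \<in> A" "\<not> finite {M \<in> A. f M = f M0}" using pigeonhole_infinite[OF infA finf] by blast
  have good: "Good n (Suc N) (f M0)" unfolding Good_def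
  proof (intro allI impI)
    fix M' assume M': "Suc N \<le> M'"
    obtain M where M: "M \<in> {M \<in> A. f M = f M0}" "M' \<le> M"
      using M0(2) infinite_nat_iff_unbounded_le by blast
    have "vbox n (y M) M" using y[of M] M unfolding A_def by simp
    then have "vbox n (y M) M'" using vbox_mono M(2) by blast
    moreover have "restrict (y M) (box (Suc N)) = f M0" using M unfolding f_def by simp
    ultimately show "\<exists>y. vbox n y M' \<and> restrict y (box (Suc N)) = f M0" by blast
  qed
  have "restrict (f M0) (box N) = restrict (y M0) (box N)"
    unfolding f_def using box_mono[of N "Suc N"] by (simp add: Int_absorb1)
  also have "\<dots> = p" using y[of M0] M0(1) unfolding A_def by simp
  finally show ?thesis using good by blast
qed

fun ch :: "nat \<Rightarrow> nat \<Rightarrow> (int \<times> int \<Rightarrow> tile)" where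
  "ch n 0 = (\<lambda>_. undefined)"
| "ch n (Suc N) = (SOME p'. Good n (Suc N) p' \<and> restrict p' (box N) = ch n N)"

lemma ch_good: assumes n: "n \<ge> 1" shows "Good n N (ch n N) \<and> (N > 0 \<longrightarrow> restrict (ch n N) (box (N - 1)) = ch n (N - 1))"
proof (induct N)
  case 0 then show ?case using Good0[OF n] by simp
next
  case (Suc N)
  then have "\<exists>p'. Good n (Suc N) p' \<and> restrict p' (box N) = ch n N" using Gstep by blast
  then have "Good n (Suc N) (ch n (Suc N)) \<and> restrict (ch n (Suc N)) (box N) = ch n N"
    unfolding ch.simps by (rule someI_ex)
  then show ?case by simp
qed

lemma ch_agree: assumes n: "n \<ge> 1" shows "N \<le> M \<Longrightarrow> m \<in> box N \<Longrightarrow> ch n M m = ch n N m"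
proof (induct M)
  case 0 then show ?case by simp
next
  case (Suc M)
  show ?case
  proof (cases "N = Suc M")
    case True then show ?thesis by simp
  next
    case False
    then have NM: "N \<le> M" using Suc.prems by simp
    have "restrict (ch n (Suc M)) (box M) = ch n M" using ch_good[OF n, of "Suc M"] by simp
    then have "ch n (Suc M) m = ch n M m" using box_mono[OF NM] Suc.prems(2)
      by (metis restrict_apply' subsetD)
    then show ?thesis using Suc.hyps NM Suc.prems(2) by simp
  qed
qed

lemma ch_vbox: assumes n: "n \<ge> 1" shows "\<exists>y. vbox n y N \<and> (\<forall>m\<in>box N. ch n N m = y m)"
proof -
  obtain y where "vbox n y N" "restrict y (box N) = ch n N" using ch_good[OF n, of N] unfolding Good_def by blast
  then show ?thesis by (metis restrict_apply')
qed

definition lev :: "int \<times> int \<Rightarrow> nat" where "lev m = nat (max \<bar>fst m\<bar> \<bar>snd m\<bar>) + 1"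

lemma in_box_lev: "m \<in> box (lev m)" unfolding box_def lev_def by (cases m) auto

lemma exists_valid: assumes n: "n \<ge> 1" shows "\<exists>x. valid n x"
proof -
  define x where "x = (\<lambda>m. ch n (lev m) m)"
  have agree: "\<And>m N. lev m \<le> N \<Longrightarrow> x m = ch n N m" unfolding x_def using ch_agree[OF n] in_box_lev by metis
  have mem: "x m \<in> tiles n" for m
  proof -
    obtain y where y: "vbox n y (lev m)" "\<forall>m'\<in>box (lev m). ch n (lev m) m' = y m'" using ch_vbox[OF n] by blast
    have im: "m \<in> box (lev m)" by (rule in_box_lev)
    have "y m \<in> tiles n" using y(1) im unfolding vbox_def by blast
    then show ?thesis unfolding x_def using y(2) im by simp
  qed
  have hor: "RIGHT (x (a,b)) = LEFT (x (a+1,b))" for a b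
  proof -
    define N where "N = lev (a,b) + lev (a+1,b)"
    obtain y where y: "vbox n y N" "\<forall>m'\<in>box N. ch n N m' = y m'" using ch_vbox[OF n] by blast
    have b1: "(a,b) \<in> box N" "(a+1,b) \<in> box N" unfolding N_def using in_box_lev box_mono
      by (meson le_add1 le_add2 subsetD)+
    have "x (a,b) = y (a,b)" "x (a+1,b) = y (a+1,b)" using agree[of "(a,b)" N] agree[of "(a+1,b)" N] y b1 unfolding N_def by auto
    then show ?thesis using y(1) b1 unfolding vbox_def by auto
  qed
  have ver: "TOP (x (a,b)) = BOTTOM (x (a,b+1))" for a b
  proof -
    define N where "N = lev (a,b) + lev (a,b+1)"
    obtain y where y: "vbox n y N" "\<forall>m'\<in>box N. ch n N m' = y m'" using ch_vbox[OF n] by blast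
    have b1: "(a,b) \<in> box N" "(a,b+1) \<in> box N" unfolding N_def using in_box_lev box_mono
      by (meson le_add1 le_add2 subsetD)+
    have "x (a,b) = y (a,b)" "x (a,b+1) = y (a,b+1)" using agree[of "(a,b)" N] agree[of "(a,b+1)" N] y b1 unfolding N_def by auto
    then show ?thesis using y(1) b1 unfolding vbox_def by auto
  qed
  show ?thesis unfolding valid_def using mem hor ver by blast
qed

theorem corollaryB:
  fixes n :: nat
  assumes "n \<ge> 1"
  shows "Omega n \<noteq> {} \<and> (\<forall>x\<in>Omega n. \<forall>k. k \<noteq> (0,0) \<longrightarrow> shift k x \<noteq> x)"
proof
  show "Omega n \<noteq> {}" using exists_valid[OF assms] unfolding Omega_def by blast
  show "\<forall>x\<in>Omega n. \<forall>k. k \<noteq> (0,0) \<longrightarrow> shift k x \<noteq> x"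
    using aperiodic[OF _ assms] unfolding Omega_def by blast
qed

end
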